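(* Let $\mathbb{C}$ be an abelian category. Then: (i) every object $X$ satisfies: if $\kappa:X\to A$ is the kernel of a split epimorphism which is also a normal epimorphism, then $\kappa$ is a split monomorphism; (ii) every object is proto-complete; (iii) an object is complete if and only if it is (regular) injective; (iv) an object is strong-complete if and only if it is a zero object. More generally, (i), (iii) (with "regular injective", i.e. injective with respect to regular monomorphisms) and (iv) hold whenever $\mathbb{C}$ is a category whose opposite $\mathbb{C}^{\mathrm{op}}$ is semi-abelian.
   Context: A normal monomorphism (epimorphism) is a kernel (cokernel) of some morphism; a protosplit monomorphism is a kernel of a split epimorphism. An object $X$ of a pointed category is proto-complete if every protosplit monomorphism with domain $X$ is a split monomorphism; complete if every normal monomorphism with domain $X$ is a split monomorphism; strong-complete if every protosplit monomorphism with domain $X$ is a split monomorphism with a unique retraction. A category is semi-abelian if it is pointed, Barr-exact, protomodular (split short five lemma holds) and has binary coproducts. *)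

theory Defs
  imports Main
begin

text \<open>A (locally small or not) category presented by its set of objects, its set of
arrows, domain, codomain, identities and composition. cComp C g f is "g after f".\<close>

record ('o, 'a) cat =
  cObj  :: "'o set"
  cArr  :: "'a set"
  cDom  :: "'a \<Rightarrow> 'o"
  cCod  :: "'a \<Rightarrow> 'o"
  cId   :: "'o \<Rightarrow> 'a"
  cComp :: "'a \<Rightarrow> 'a \<Rightarrow> 'a"

definition hom :: "('o, 'a) cat \<Rightarrow> 'o \<Rightarrow> 'o \<Rightarrow> 'a set" where
  "hom C X Y = {f \<in> cArr C. cDom C f = X \<and> cCod C f = Y}"

definition category :: "('o, 'a) cat \<Rightarrow> bool" where
  "category C \<longleftrightarrow>
     (\<forall>f \<in> cArr C. cDom C f \<in> cObj C \<and> cCod C f \<in> cObj C) \<and>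
     (\<forall>X \<in> cObj C. cId C X \<in> hom C X X) \<and>
     (\<forall>f g. f \<in> cArr C \<and> g \<in> cArr C \<and> cCod C f = cDom C g \<longrightarrow>
            cComp C g f \<in> hom C (cDom C f) (cCod C g)) \<and>
     (\<forall>f \<in> cArr C. cComp C f (cId C (cDom C f)) = f \<and> cComp C (cId C (cCod C f)) f = f) \<and>
     (\<forall>f g h. f \<in> cArr C \<and> g \<in> cArr C \<and> h \<in> cArr C \<and>
            cCod C f = cDom C g \<and> cCod C g = cDom C h \<longrightarrow>
            cComp C h (cComp C g f) = cComp C (cComp C h g) f)"

definition op_cat :: "('o, 'a) cat \<Rightarrow> ('o, 'a) cat" where
  "op_cat C = C\<lparr>cDom := cCod C, cCod := cDom C, cComp := (\<lambda>g f. cComp C f g)\<rparr>"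

definition iso :: "('o, 'a) cat \<Rightarrow> 'a \<Rightarrow> bool" where
  "iso C f \<longleftrightarrow> f \<in> cArr C \<and> (\<exists>g \<in> hom C (cCod C f) (cDom C f).
      cComp C g f = cId C (cDom C f) \<and> cComp C f g = cId C (cCod C f))"

definition mono :: "('o, 'a) cat \<Rightarrow> 'a \<Rightarrow> bool" where
  "mono C m \<longleftrightarrow> m \<in> cArr C \<and>
     (\<forall>g h. g \<in> cArr C \<and> h \<in> cArr C \<and> cCod C g = cDom C m \<and> cCod C h = cDom C m \<and>
            cDom C g = cDom C h \<and> cComp C m g = cComp C m h \<longrightarrow> g = h)"

definition epi :: "('o, 'a) cat \<Rightarrow> 'a \<Rightarrow> bool" where
  "epi C e \<longleftrightarrow> mono (op_cat C) e"

definition is_retraction :: "('o, 'a) cat \<Rightarrow> 'a \<Rightarrow> 'a \<Rightarrow> bool" where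
  "is_retraction C r m \<longleftrightarrow> m \<in> cArr C \<and> r \<in> hom C (cCod C m) (cDom C m) \<and>
     cComp C r m = cId C (cDom C m)"

definition split_mono :: "('o, 'a) cat \<Rightarrow> 'a \<Rightarrow> bool" where
  "split_mono C m \<longleftrightarrow> m \<in> cArr C \<and> (\<exists>r. is_retraction C r m)"

definition split_epi :: "('o, 'a) cat \<Rightarrow> 'a \<Rightarrow> bool" where
  "split_epi C p \<longleftrightarrow> p \<in> cArr C \<and>
     (\<exists>s \<in> hom C (cCod C p) (cDom C p). cComp C p s = cId C (cCod C p))"

definition initial :: "('o, 'a) cat \<Rightarrow> 'o \<Rightarrow> bool" where
  "initial C Z \<longleftrightarrow> Z \<in> cObj C \<and> (\<forall>Y \<in> cObj C. \<exists>!f. f \<in> hom C Z Y)"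

definition terminal :: "('o, 'a) cat \<Rightarrow> 'o \<Rightarrow> bool" where
  "terminal C Z \<longleftrightarrow> initial (op_cat C) Z"

definition zero_obj :: "('o, 'a) cat \<Rightarrow> 'o \<Rightarrow> bool" where
  "zero_obj C Z \<longleftrightarrow> initial C Z \<and> terminal C Z"

definition pointed :: "('o, 'a) cat \<Rightarrow> bool" where
  "pointed C \<longleftrightarrow> category C \<and> (\<exists>Z. zero_obj C Z)"

definition zero_arr :: "('o, 'a) cat \<Rightarrow> 'a \<Rightarrow> bool" where
  "zero_arr C f \<longleftrightarrow> f \<in> cArr C \<and> (\<exists>Z g h. zero_obj C Z \<and> g \<in> hom C (cDom C f) Z \<and>
      h \<in> hom C Z (cCod C f) \<and> f = cComp C h g)"

definition is_kernel :: "('o, 'a) cat \<Rightarrow> 'a \<Rightarrow> 'a \<Rightarrow> bool" where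
  "is_kernel C k f \<longleftrightarrow> k \<in> cArr C \<and> f \<in> cArr C \<and> cCod C k = cDom C f \<and>
     zero_arr C (cComp C f k) \<and>
     (\<forall>g \<in> cArr C. cCod C g = cDom C f \<and> zero_arr C (cComp C f g) \<longrightarrow>
        (\<exists>!u. u \<in> hom C (cDom C g) (cDom C k) \<and> cComp C k u = g))"

definition is_cokernel :: "('o, 'a) cat \<Rightarrow> 'a \<Rightarrow> 'a \<Rightarrow> bool" where
  "is_cokernel C q f \<longleftrightarrow> is_kernel (op_cat C) q f"

definition normal_mono :: "('o, 'a) cat \<Rightarrow> 'a \<Rightarrow> bool" where
  "normal_mono C m \<longleftrightarrow> (\<exists>f. is_kernel C m f)"

definition normal_epi :: "('o, 'a) cat \<Rightarrow> 'a \<Rightarrow> bool" where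
  "normal_epi C e \<longleftrightarrow> (\<exists>f. is_cokernel C e f)"

definition protosplit_mono :: "('o, 'a) cat \<Rightarrow> 'a \<Rightarrow> bool" where
  "protosplit_mono C m \<longleftrightarrow> (\<exists>p. split_epi C p \<and> is_kernel C m p)"

definition is_equalizer :: "('o, 'a) cat \<Rightarrow> 'a \<Rightarrow> 'a \<Rightarrow> 'a \<Rightarrow> bool" where
  "is_equalizer C e f g \<longleftrightarrow> e \<in> cArr C \<and> f \<in> cArr C \<and> g \<in> cArr C \<and>
     cDom C f = cDom C g \<and> cCod C f = cCod C g \<and> cCod C e = cDom C f \<and>
     cComp C f e = cComp C g e \<and>
     (\<forall>h \<in> cArr C. cCod C h = cDom C f \<and> cComp C f h = cComp C g h \<longrightarrow>
        (\<exists>!u. u \<in> hom C (cDom C h) (cDom C e) \<and> cComp C e u = h))"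

definition is_coequalizer :: "('o, 'a) cat \<Rightarrow> 'a \<Rightarrow> 'a \<Rightarrow> 'a \<Rightarrow> bool" where
  "is_coequalizer C q f g \<longleftrightarrow> is_equalizer (op_cat C) q f g"

definition regular_mono :: "('o, 'a) cat \<Rightarrow> 'a \<Rightarrow> bool" where
  "regular_mono C m \<longleftrightarrow> (\<exists>f g. is_equalizer C m f g)"

definition regular_epi :: "('o, 'a) cat \<Rightarrow> 'a \<Rightarrow> bool" where
  "regular_epi C e \<longleftrightarrow> (\<exists>f g. is_coequalizer C e f g)"

definition is_product :: "('o, 'a) cat \<Rightarrow> 'o \<Rightarrow> 'a \<Rightarrow> 'a \<Rightarrow> 'o \<Rightarrow> 'o \<Rightarrow> bool" where
  "is_product C P p1 p2 A B \<longleftrightarrow> p1 \<in> hom C P A \<and> p2 \<in> hom C P B \<and>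
     (\<forall>T \<in> cObj C. \<forall>f1 \<in> hom C T A. \<forall>f2 \<in> hom C T B.
        \<exists>!u. u \<in> hom C T P \<and> cComp C p1 u = f1 \<and> cComp C p2 u = f2)"

definition has_binary_products :: "('o, 'a) cat \<Rightarrow> bool" where
  "has_binary_products C \<longleftrightarrow>
     (\<forall>A \<in> cObj C. \<forall>B \<in> cObj C. \<exists>P p1 p2. is_product C P p1 p2 A B)"

definition has_binary_coproducts :: "('o, 'a) cat \<Rightarrow> bool" where
  "has_binary_coproducts C \<longleftrightarrow> has_binary_products (op_cat C)"

definition has_equalizers :: "('o, 'a) cat \<Rightarrow> bool" where
  "has_equalizers C \<longleftrightarrow> (\<forall>f \<in> cArr C. \<forall>g \<in> cArr C.
     cDom C f = cDom C g \<and> cCod C f = cCod C g \<longrightarrow> (\<exists>e. is_equalizer C e f g))"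

definition has_finite_limits :: "('o, 'a) cat \<Rightarrow> bool" where
  "has_finite_limits C \<longleftrightarrow> (\<exists>T. terminal C T) \<and> has_binary_products C \<and> has_equalizers C"

definition is_pullback :: "('o, 'a) cat \<Rightarrow> 'a \<Rightarrow> 'a \<Rightarrow> 'a \<Rightarrow> 'a \<Rightarrow> bool" where
  "is_pullback C p1 p2 f g \<longleftrightarrow> p1 \<in> cArr C \<and> p2 \<in> cArr C \<and> f \<in> cArr C \<and> g \<in> cArr C \<and>
     cDom C p1 = cDom C p2 \<and> cCod C p1 = cDom C f \<and> cCod C p2 = cDom C g \<and>
     cCod C f = cCod C g \<and> cComp C f p1 = cComp C g p2 \<and>
     (\<forall>T \<in> cObj C. \<forall>a \<in> hom C T (cDom C f). \<forall>b \<in> hom C T (cDom C g).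
        cComp C f a = cComp C g b \<longrightarrow>
        (\<exists>!u. u \<in> hom C T (cDom C p1) \<and> cComp C p1 u = a \<and> cComp C p2 u = b))"

definition is_kernel_pair :: "('o, 'a) cat \<Rightarrow> 'a \<Rightarrow> 'a \<Rightarrow> 'a \<Rightarrow> bool" where
  "is_kernel_pair C r1 r2 f \<longleftrightarrow> is_pullback C r1 r2 f f"

definition injective_wrt :: "('o, 'a) cat \<Rightarrow> ('a \<Rightarrow> bool) \<Rightarrow> 'o \<Rightarrow> bool" where
  "injective_wrt C P X \<longleftrightarrow> X \<in> cObj C \<and>
     (\<forall>m f. P m \<and> f \<in> hom C (cDom C m) X \<longrightarrow>
        (\<exists>g \<in> hom C (cCod C m) X. cComp C g m = f))"

definition injective_obj :: "('o, 'a) cat \<Rightarrow> 'o \<Rightarrow> bool" where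
  "injective_obj C X \<longleftrightarrow> injective_wrt C (mono C) X"

definition regular_injective_obj :: "('o, 'a) cat \<Rightarrow> 'o \<Rightarrow> bool" where
  "regular_injective_obj C X \<longleftrightarrow> injective_wrt C (regular_mono C) X"

definition proto_complete_obj :: "('o, 'a) cat \<Rightarrow> 'o \<Rightarrow> bool" where
  "proto_complete_obj C X \<longleftrightarrow> X \<in> cObj C \<and>
     (\<forall>m. protosplit_mono C m \<and> cDom C m = X \<longrightarrow> split_mono C m)"

definition complete_obj :: "('o, 'a) cat \<Rightarrow> 'o \<Rightarrow> bool" where
  "complete_obj C X \<longleftrightarrow> X \<in> cObj C \<and>
     (\<forall>m. normal_mono C m \<and> cDom C m = X \<longrightarrow> split_mono C m)"

definition strong_complete_obj :: "('o, 'a) cat \<Rightarrow> 'o \<Rightarrow> bool" where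
  "strong_complete_obj C X \<longleftrightarrow> X \<in> cObj C \<and>
     (\<forall>m. protosplit_mono C m \<and> cDom C m = X \<longrightarrow> (\<exists>!r. is_retraction C r m))"

definition abelian :: "('o, 'a) cat \<Rightarrow> bool" where
  "abelian C \<longleftrightarrow> pointed C \<and> has_binary_products C \<and> has_binary_coproducts C \<and>
     (\<forall>f \<in> cArr C. \<exists>k. is_kernel C k f) \<and> (\<forall>f \<in> cArr C. \<exists>q. is_cokernel C q f) \<and>
     (\<forall>m. mono C m \<longrightarrow> normal_mono C m) \<and> (\<forall>e. epi C e \<longrightarrow> normal_epi C e)"

definition regular_cat :: "('o, 'a) cat \<Rightarrow> bool" where
  "regular_cat C \<longleftrightarrow> category C \<and> has_finite_limits C \<and>
     (\<forall>f r1 r2. is_kernel_pair C r1 r2 f \<longrightarrow> (\<exists>q. is_coequalizer C q r1 r2)) \<and>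
     (\<forall>e g p1 p2. regular_epi C e \<and> is_pullback C p1 p2 g e \<longrightarrow> regular_epi C p1)"

text \<open>Internal equivalence relation r1, r2 : R \<rightarrow> X (jointly monic, and inducing an
equivalence relation on each hom-set hom T X).\<close>
definition equiv_rel :: "('o, 'a) cat \<Rightarrow> 'a \<Rightarrow> 'a \<Rightarrow> bool" where
  "equiv_rel C r1 r2 \<longleftrightarrow> r1 \<in> cArr C \<and> r2 \<in> cArr C \<and>
     cDom C r1 = cDom C r2 \<and> cCod C r1 = cCod C r2 \<and>
     (\<forall>T \<in> cObj C. \<forall>a \<in> hom C T (cDom C r1). \<forall>b \<in> hom C T (cDom C r1).
        cComp C r1 a = cComp C r1 b \<and> cComp C r2 a = cComp C r2 b \<longrightarrow> a = b) \<and>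
     (\<forall>T \<in> cObj C.
        (\<forall>x \<in> hom C T (cCod C r1). \<exists>a \<in> hom C T (cDom C r1).
            cComp C r1 a = x \<and> cComp C r2 a = x) \<and>
        (\<forall>a \<in> hom C T (cDom C r1). \<exists>b \<in> hom C T (cDom C r1).
            cComp C r1 b = cComp C r2 a \<and> cComp C r2 b = cComp C r1 a) \<and>
        (\<forall>a \<in> hom C T (cDom C r1). \<forall>b \<in> hom C T (cDom C r1).
            cComp C r2 a = cComp C r1 b \<longrightarrow>
            (\<exists>c \<in> hom C T (cDom C r1). cComp C r1 c = cComp C r1 a \<and> cComp C r2 c = cComp C r2 b)))"

definition barr_exact :: "('o, 'a) cat \<Rightarrow> bool" where
  "barr_exact C \<longleftrightarrow> regular_cat C \<and>
     (\<forall>r1 r2. equiv_rel C r1 r2 \<longrightarrow> (\<exists>f. is_kernel_pair C r1 r2 f))"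

definition split_short_five :: "('o, 'a) cat \<Rightarrow> bool" where
  "split_short_five C \<longleftrightarrow>
     (\<forall>p s k p' s' k' u v w.
        p \<in> cArr C \<and> s \<in> hom C (cCod C p) (cDom C p) \<and> cComp C p s = cId C (cCod C p) \<and>
        is_kernel C k p \<and>
        p' \<in> cArr C \<and> s' \<in> hom C (cCod C p') (cDom C p') \<and> cComp C p' s' = cId C (cCod C p') \<and>
        is_kernel C k' p' \<and>
        u \<in> hom C (cDom C k) (cDom C k') \<and> v \<in> hom C (cDom C p) (cDom C p') \<and>
        w \<in> hom C (cCod C p) (cCod C p') \<and>
        cComp C k' u = cComp C v k \<and> cComp C p' v = cComp C w p \<and> cComp C v s = cComp C s' w \<and>
        iso C u \<and> iso C w \<longrightarrow> iso C v)"

definition semi_abelian :: "('o, 'a) cat \<Rightarrow> bool" where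
  "semi_abelian C \<longleftrightarrow> pointed C \<and> barr_exact C \<and> split_short_five C \<and> has_binary_coproducts C"

end

theory Submission
  imports Defs
begin

lemma op_simps[simp]:
  "cObj (op_cat C) = cObj C" "cArr (op_cat C) = cArr C" "cDom (op_cat C) = cCod C"
  "cCod (op_cat C) = cDom C" "cId (op_cat C) = cId C" "cComp (op_cat C) g f = cComp C f g"
  by (simp_all add: op_cat_def)

lemma op_op[simp]: "op_cat (op_cat C) = C"
  by (simp add: op_cat_def)

lemma hom_op[simp]: "hom (op_cat C) X Y = hom C Y X"
  by (auto simp: hom_def)

lemma category_op[simp]: "category (op_cat C) = category C"
  unfolding category_def hom_def by (auto; metis)

lemma zero_obj_op[simp]: "zero_obj (op_cat C) Z = zero_obj C Z"
  unfolding zero_obj_def terminal_def by auto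

lemma zero_arr_op[simp]: "zero_arr (op_cat C) f = zero_arr C f"
  unfolding zero_arr_def by auto

lemma zero_obj_op'[simp]: "zero_obj (op_cat C) = zero_obj C"
  by (rule ext) simp

lemma pointed_op[simp]: "pointed (op_cat C) = pointed C"
  unfolding pointed_def by simp

lemma epi_op[simp]: "epi (op_cat C) f = mono C f"
  unfolding epi_def by simp

lemma mono_op[simp]: "mono (op_cat C) f = epi C f"
  unfolding epi_def by simp

lemma iso_op[simp]: "iso (op_cat C) f = iso C f"
  unfolding iso_def by auto

lemma is_cokernel_op[simp]: "is_cokernel (op_cat C) = is_kernel C"
  unfolding is_cokernel_def by simp

lemma normal_mono_op[simp]: "normal_mono (op_cat C) = normal_epi C"
  unfolding normal_mono_def normal_epi_def is_cokernel_def by simp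

lemma normal_epi_op[simp]: "normal_epi (op_cat C) = normal_mono C"
  unfolding normal_mono_def normal_epi_def is_cokernel_def by simp

lemma is_coequalizer_op[simp]: "is_coequalizer (op_cat C) = is_equalizer C"
  unfolding is_coequalizer_def by simp

lemma regular_epi_op[simp]: "regular_epi (op_cat C) = regular_mono C"
  unfolding regular_epi_def regular_mono_def by simp

lemma has_binary_coproducts_op[simp]: "has_binary_coproducts (op_cat C) = has_binary_products C"
  unfolding has_binary_coproducts_def by simp

locale pc =
  fixes C :: "('o,'a) cat"
  assumes pointed: "pointed C"
begin

lemma cat: "category C" using pointed by (simp add: pointed_def)

lemma dom_obj[simp]: "f \<in> cArr C \<Longrightarrow> cDom C f \<in> cObj C"
  using cat unfolding category_def by blast
lemma cod_obj[simp]: "f \<in> cArr C \<Longrightarrow> cCod C f \<in> cObj C"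
  using cat unfolding category_def by blast
lemma id_hom: "X \<in> cObj C \<Longrightarrow> cId C X \<in> hom C X X"
  using cat unfolding category_def by blast
lemma id_arr[simp]: "X \<in> cObj C \<Longrightarrow> cId C X \<in> cArr C"
  using id_hom by (simp add: hom_def)
lemma dom_id[simp]: "X \<in> cObj C \<Longrightarrow> cDom C (cId C X) = X"
  using id_hom by (simp add: hom_def)
lemma cod_id[simp]: "X \<in> cObj C \<Longrightarrow> cCod C (cId C X) = X"
  using id_hom by (simp add: hom_def)
lemma comp_hom0: "f \<in> cArr C \<Longrightarrow> g \<in> cArr C \<Longrightarrow> cCod C f = cDom C g \<Longrightarrow>
   cComp C g f \<in> hom C (cDom C f) (cCod C g)"
  using cat unfolding category_def by blast
lemma comp_arr[simp]: "f \<in> cArr C \<Longrightarrow> g \<in> cArr C \<Longrightarrow> cCod C f = cDom C g \<Longrightarrow> cComp C g f \<in> cArr C"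
  using comp_hom0 by (simp add: hom_def)
lemma dom_comp[simp]: "f \<in> cArr C \<Longrightarrow> g \<in> cArr C \<Longrightarrow> cCod C f = cDom C g \<Longrightarrow> cDom C (cComp C g f) = cDom C f"
  using comp_hom0 by (simp add: hom_def)
lemma cod_comp[simp]: "f \<in> cArr C \<Longrightarrow> g \<in> cArr C \<Longrightarrow> cCod C f = cDom C g \<Longrightarrow> cCod C (cComp C g f) = cCod C g"
  using comp_hom0 by (simp add: hom_def)
lemma comp_idr[simp]: "f \<in> cArr C \<Longrightarrow> cDom C f = X \<Longrightarrow> cComp C f (cId C X) = f"
  using cat unfolding category_def by blast
lemma comp_idl[simp]: "f \<in> cArr C \<Longrightarrow> cCod C f = Y \<Longrightarrow> cComp C (cId C Y) f = f"
  using cat unfolding category_def by blast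
lemma assoc: "f \<in> cArr C \<Longrightarrow> g \<in> cArr C \<Longrightarrow> h \<in> cArr C \<Longrightarrow> cCod C f = cDom C g \<Longrightarrow>
   cCod C g = cDom C h \<Longrightarrow> cComp C (cComp C h g) f = cComp C h (cComp C g f)"
proof -
  have "\<forall>f g h. f \<in> cArr C \<and> g \<in> cArr C \<and> h \<in> cArr C \<and>
            cCod C f = cDom C g \<and> cCod C g = cDom C h \<longrightarrow>
            cComp C h (cComp C g f) = cComp C (cComp C h g) f"
    using cat unfolding category_def by blast
  moreover assume "f \<in> cArr C" "g \<in> cArr C" "h \<in> cArr C" "cCod C f = cDom C g" "cCod C g = cDom C h"
  ultimately show ?thesis by metis
qed
lemma assocL[simp]: "f \<in> cArr C \<Longrightarrow> g \<in> cArr C \<Longrightarrow> h \<in> cArr C \<Longrightarrow> cCod C f = cDom C g \<Longrightarrow>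
   cCod C g = cDom C h \<Longrightarrow> cComp C h (cComp C g f) = cComp C (cComp C h g) f"
  by (simp add: assoc)
lemma cancel_in[simp]: "h \<in> cArr C \<Longrightarrow> e \<in> cArr C \<Longrightarrow> s \<in> cArr C \<Longrightarrow> cCod C s = cDom C e \<Longrightarrow>
   cCod C e = cDom C h \<Longrightarrow> cComp C e s = cId C (cDom C h) \<Longrightarrow> cComp C (cComp C h e) s = h"
  by (simp add: assoc)
lemma comp_hom: "f \<in> hom C X Y \<Longrightarrow> g \<in> hom C Y Z \<Longrightarrow> cComp C g f \<in> hom C X Z"
  by (simp add: hom_def)

lemma hom_objs: "f \<in> hom C X Y \<Longrightarrow> X \<in> cObj C \<and> Y \<in> cObj C"
  unfolding hom_def using dom_obj cod_obj by blast

lemma cancel_l: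
  assumes "r \<in> cArr C" "m \<in> cArr C" "g \<in> cArr C" "cCod C g = cDom C m"
  "cCod C m = cDom C r" "cComp C r m = cId C (cDom C m)" shows "cComp C r (cComp C m g) = g"
proof -
  have "cComp C r (cComp C m g) = cComp C (cComp C r m) g" using assms(1-5) by simp
  then show ?thesis using assms by simp
qed

definition z0 where "z0 = (SOME Z. zero_obj C Z)"
lemma z0: "zero_obj C z0"
  using pointed unfolding pointed_def z0_def by (metis someI_ex)

lemma zero_obj_init: "zero_obj C Z \<Longrightarrow> Y \<in> cObj C \<Longrightarrow> \<exists>!f. f \<in> hom C Z Y"
  unfolding zero_obj_def initial_def by blast
lemma zero_obj_term: "zero_obj C Z \<Longrightarrow> Y \<in> cObj C \<Longrightarrow> \<exists>!f. f \<in> hom C Y Z"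
  unfolding zero_obj_def terminal_def initial_def by simp
lemma zero_obj_obj: "zero_obj C Z \<Longrightarrow> Z \<in> cObj C"
  unfolding zero_obj_def initial_def by blast

definition ini where "ini Y = (THE f. f \<in> hom C z0 Y)"
definition ter where "ter X = (THE f. f \<in> hom C X z0)"

lemma ini: "Y \<in> cObj C \<Longrightarrow> ini Y \<in> hom C z0 Y"
  unfolding ini_def using zero_obj_init[OF z0] by (rule theI')
lemma ini_unique: "f \<in> hom C z0 Y \<Longrightarrow> f = ini Y"
proof -
  assume f: "f \<in> hom C z0 Y"
  then have Y: "Y \<in> cObj C" using hom_objs by blast
  have "\<exists>!f. f \<in> hom C z0 Y" using zero_obj_init[OF z0 Y] .
  then show ?thesis using f ini[OF Y] by blast
qed
lemma ter: "X \<in> cObj C \<Longrightarrow> ter X \<in> hom C X z0"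
  unfolding ter_def using zero_obj_term[OF z0] by (rule theI')
lemma ter_unique: "f \<in> hom C X z0 \<Longrightarrow> f = ter X"
proof -
  assume f: "f \<in> hom C X z0"
  then have X: "X \<in> cObj C" using hom_objs by blast
  have "\<exists>!f. f \<in> hom C X z0" using zero_obj_term[OF z0 X] .
  then show ?thesis using f ter[OF X] by blast
qed

definition zero where "zero X Y = cComp C (ini Y) (ter X)"

lemma zero_hom: "X \<in> cObj C \<Longrightarrow> Y \<in> cObj C \<Longrightarrow> zero X Y \<in> hom C X Y"
  unfolding zero_def using ini ter comp_hom by blast
lemma zero_arr[simp]: "X \<in> cObj C \<Longrightarrow> Y \<in> cObj C \<Longrightarrow> zero X Y \<in> cArr C"
  using zero_hom by (simp add: hom_def)
lemma zero_dom[simp]: "X \<in> cObj C \<Longrightarrow> Y \<in> cObj C \<Longrightarrow> cDom C (zero X Y) = X"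
  using zero_hom by (simp add: hom_def)
lemma zero_cod[simp]: "X \<in> cObj C \<Longrightarrow> Y \<in> cObj C \<Longrightarrow> cCod C (zero X Y) = Y"
  using zero_hom by (simp add: hom_def)

lemma zero_comp[simp]: "g \<in> cArr C \<Longrightarrow> cCod C g = Y \<Longrightarrow> W \<in> cObj C \<Longrightarrow>
   cComp C (zero Y W) g = zero (cDom C g) W"
proof -
  assume a: "g \<in> cArr C" "cCod C g = Y" "W \<in> cObj C"
  have i: "ini W \<in> hom C z0 W" "ter Y \<in> hom C Y z0" using ini ter a by auto
  have "cComp C (ter Y) g = ter (cDom C g)"
    using i a by (intro ter_unique) (simp add: hom_def)
  note eq = this
  have "cComp C (zero Y W) g = cComp C (ini W) (cComp C (ter Y) g)"
    unfolding zero_def using i a by (simp add: hom_def)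
  also have "\<dots> = zero (cDom C g) W" unfolding zero_def using eq by simp
  finally show ?thesis .
qed

lemma comp_zero[simp]: "f \<in> cArr C \<Longrightarrow> cDom C f = Y \<Longrightarrow> X \<in> cObj C \<Longrightarrow>
   cComp C f (zero X Y) = zero X (cCod C f)"
proof -
  assume a: "f \<in> cArr C" "cDom C f = Y" "X \<in> cObj C"
  have i: "ini Y \<in> hom C z0 Y" "ter X \<in> hom C X z0" using ini ter a by auto
  have "cComp C f (ini Y) = ini (cCod C f)"
    using i a by (intro ini_unique) (simp add: hom_def)
  note eq = this
  have "cComp C f (zero X Y) = cComp C (cComp C f (ini Y)) (ter X)"
    unfolding zero_def using i a by (simp add: hom_def)
  also have "\<dots> = zero X (cCod C f)" unfolding zero_def using eq by simp
  finally show ?thesis .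
qed

lemma zero_in[simp]: "h \<in> cArr C \<Longrightarrow> f \<in> cArr C \<Longrightarrow> k \<in> cArr C \<Longrightarrow> cCod C k = cDom C f \<Longrightarrow>
   cCod C f = cDom C h \<Longrightarrow> cComp C f k = zero (cDom C k) (cCod C f) \<Longrightarrow>
   cComp C (cComp C h f) k = zero (cDom C k) (cCod C h)"
  by (simp add: assoc)

lemma zero_obj_from: "zero_obj C Z \<Longrightarrow> f \<in> hom C Z Y \<Longrightarrow> f = zero Z Y"
proof -
  assume z: "zero_obj C Z" and f: "f \<in> hom C Z Y"
  then have Y: "Y \<in> cObj C" using hom_objs by blast
  have u: "\<exists>!f. f \<in> hom C Z Y" using zero_obj_init[OF z Y] .
  have "zero Z Y \<in> hom C Z Y" using zero_hom zero_obj_obj[OF z] Y by blast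
  then show ?thesis using u f by blast
qed
lemma zero_obj_to: "zero_obj C Z \<Longrightarrow> f \<in> hom C X Z \<Longrightarrow> f = zero X Z"
proof -
  assume z: "zero_obj C Z" and f: "f \<in> hom C X Z"
  then have X: "X \<in> cObj C" using hom_objs by blast
  have u: "\<exists>!f. f \<in> hom C X Z" using zero_obj_term[OF z X] .
  have "zero X Z \<in> hom C X Z" using zero_hom zero_obj_obj[OF z] X by blast
  then show ?thesis using u f by blast
qed

lemma zero_arr_iff: "zero_arr C f \<longleftrightarrow> f \<in> cArr C \<and> f = zero (cDom C f) (cCod C f)"
proof
  assume "zero_arr C f"
  then obtain Z g h where f: "f \<in> cArr C" "zero_obj C Z" "g \<in> hom C (cDom C f) Z"
     "h \<in> hom C Z (cCod C f)" "f = cComp C h g"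
    unfolding zero_arr_def by blast
  have g: "g = zero (cDom C f) Z" using zero_obj_to f by blast
  have Z: "Z \<in> cObj C" using zero_obj_obj f by blast
  have "cComp C h g = zero (cDom C f) (cCod C f)"
    unfolding g using f(1,4) Z by (simp add: hom_def)
  then show "f \<in> cArr C \<and> f = zero (cDom C f) (cCod C f)"
    using f(1,5) by simp
next
  assume a: "f \<in> cArr C \<and> f = zero (cDom C f) (cCod C f)"
  have "ini (cCod C f) \<in> hom C z0 (cCod C f)" "ter (cDom C f) \<in> hom C (cDom C f) z0"
    using a ini ter by auto
  then show "zero_arr C f" unfolding zero_arr_def zero_def
    using z0 a by (auto simp: zero_def)
qed

lemma zero_is_zero_arr[simp]: "X \<in> cObj C \<Longrightarrow> Y \<in> cObj C \<Longrightarrow> zero_arr C (zero X Y)"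
  by (simp add: zero_arr_iff)

lemma id_zero_obj: "X \<in> cObj C \<Longrightarrow> cId C X = zero X X \<Longrightarrow> zero_obj C X"
proof -
  assume a: "X \<in> cObj C" "cId C X = zero X X"
  have 1: "initial C X" unfolding initial_def
  proof (intro conjI ballI a(1) ex1I)
    fix Y assume Y: "Y \<in> cObj C"
    show "zero X Y \<in> hom C X Y" using zero_hom a Y by blast
    fix f assume f: "f \<in> hom C X Y"
    then have "f = cComp C f (cId C X)" by (simp add: hom_def)
    also have "\<dots> = zero X Y" using f a by (simp add: hom_def)
    finally show "f = zero X Y" .
  qed
  have 2: "terminal C X" unfolding terminal_def initial_def
  proof (simp, intro conjI ballI a(1) ex1I)
    fix Y assume Y: "Y \<in> cObj C"
    show "zero Y X \<in> hom C Y X" using zero_hom a Y by blast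
    fix f assume f: "f \<in> hom C Y X"
    then have "f = cComp C (cId C X) f" by (simp add: hom_def)
    also have "\<dots> = zero Y X" using f a by (simp add: hom_def)
    finally show "f = zero Y X" .
  qed
  show ?thesis using 1 2 by (simp add: zero_obj_def)
qed

lemma monoD:
  assumes "mono C m" "g \<in> hom C T (cDom C m)" "h \<in> hom C T (cDom C m)"
    "cComp C m g = cComp C m h" shows "g = h"
proof -
  have "\<forall>g h. g \<in> cArr C \<and> h \<in> cArr C \<and> cCod C g = cDom C m \<and> cCod C h = cDom C m \<and>
            cDom C g = cDom C h \<and> cComp C m g = cComp C m h \<longrightarrow> g = h"
    using assms(1) unfolding mono_def by (elim conjE)
  then show ?thesis by (rule allE[of _ g], elim allE[of _ h]) (use assms in \<open>auto simp: hom_def\<close>)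
qed
lemma monoI:
  assumes "m \<in> cArr C" "\<And>g h T. g \<in> hom C T (cDom C m) \<Longrightarrow> h \<in> hom C T (cDom C m) \<Longrightarrow>
  cComp C m g = cComp C m h \<Longrightarrow> g = h" shows "mono C m"
  unfolding mono_def
proof (intro conjI assms(1) allI impI)
  fix g h assume "g \<in> cArr C \<and> h \<in> cArr C \<and> cCod C g = cDom C m \<and> cCod C h = cDom C m \<and>
            cDom C g = cDom C h \<and> cComp C m g = cComp C m h"
  then show "g = h" using assms(2)[of g "cDom C g" h] by (simp add: hom_def)
qed
lemma epiD:
  assumes "epi C e" "g \<in> hom C (cCod C e) T" "h \<in> hom C (cCod C e) T"
    "cComp C g e = cComp C h e" shows "g = h"
proof -
  have "\<forall>g h. g \<in> cArr C \<and> h \<in> cArr C \<and> cDom C g = cCod C e \<and> cDom C h = cCod C e \<and>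
            cCod C g = cCod C h \<and> cComp C g e = cComp C h e \<longrightarrow> g = h"
    using assms(1) unfolding epi_def mono_def op_simps by (elim conjE)
  then show ?thesis by (rule allE[of _ g], elim allE[of _ h]) (use assms in \<open>auto simp: hom_def\<close>)
qed
lemma epiI:
  assumes "e \<in> cArr C" "\<And>g h T. g \<in> hom C (cCod C e) T \<Longrightarrow> h \<in> hom C (cCod C e) T \<Longrightarrow>
  cComp C g e = cComp C h e \<Longrightarrow> g = h" shows "epi C e"
  unfolding epi_def mono_def op_simps
proof (intro conjI assms(1) allI impI)
  fix g h assume "g \<in> cArr C \<and> h \<in> cArr C \<and> cDom C g = cCod C e \<and> cDom C h = cCod C e \<and>
            cCod C g = cCod C h \<and> cComp C g e = cComp C h e"
  then show "g = h" using assms(2)[of g "cCod C g" h] by (simp add: hom_def)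
qed

lemma mono_arr: "mono C m \<Longrightarrow> m \<in> cArr C" unfolding mono_def by (elim conjE)
lemma epi_arr: "epi C m \<Longrightarrow> m \<in> cArr C" unfolding epi_def mono_def op_simps by (elim conjE)

lemma retraction_mono: "m \<in> cArr C \<Longrightarrow> r \<in> hom C (cCod C m) (cDom C m) \<Longrightarrow>
   cComp C r m = cId C (cDom C m) \<Longrightarrow> mono C m"
proof (rule monoI)
  fix g h T
  assume a: "m \<in> cArr C" "r \<in> hom C (cCod C m) (cDom C m)" "cComp C r m = cId C (cDom C m)"
    "g \<in> hom C T (cDom C m)" "h \<in> hom C T (cDom C m)" and e: "cComp C m g = cComp C m h"
  have "g = cComp C r (cComp C m g)" using a by (simp add: hom_def cancel_l)
  also have "\<dots> = cComp C r (cComp C m h)" using e by simp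
  also have "\<dots> = h" using a by (simp add: hom_def cancel_l)
  finally show "g = h" .
qed

lemma section_epi: "e \<in> cArr C \<Longrightarrow> s \<in> hom C (cCod C e) (cDom C e) \<Longrightarrow>
   cComp C e s = cId C (cCod C e) \<Longrightarrow> epi C e"
proof (rule epiI)
  fix g h T
  assume a: "e \<in> cArr C" "s \<in> hom C (cCod C e) (cDom C e)" "cComp C e s = cId C (cCod C e)"
    "g \<in> hom C (cCod C e) T" "h \<in> hom C (cCod C e) T" and q: "cComp C g e = cComp C h e"
  have "g = cComp C g (cComp C e s)" using a by (simp add: hom_def)
  also have "\<dots> = cComp C (cComp C g e) s" by (rule assocL) (use a in \<open>auto simp: hom_def\<close>)
  also have "\<dots> = cComp C (cComp C h e) s" using q by simp
  also have "\<dots> = cComp C h (cComp C e s)" by (rule assoc) (use a in \<open>auto simp: hom_def\<close>)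
  also have "\<dots> = h" using a by (simp add: hom_def)
  finally show "g = h" .
qed

lemma iso_D: "iso C f \<Longrightarrow> \<exists>g \<in> hom C (cCod C f) (cDom C f).
      cComp C g f = cId C (cDom C f) \<and> cComp C f g = cId C (cCod C f)"
  unfolding iso_def by blast
lemma iso_arr: "iso C f \<Longrightarrow> f \<in> cArr C" unfolding iso_def by blast
lemma iso_epi: "iso C f \<Longrightarrow> epi C f"
proof -
  assume i: "iso C f"
  then obtain g where "g \<in> hom C (cCod C f) (cDom C f)" "cComp C f g = cId C (cCod C f)"
    using iso_D by blast
  then show ?thesis using section_epi iso_arr[OF i] by blast
qed
lemma iso_mono: "iso C f \<Longrightarrow> mono C f"
proof -
  assume i: "iso C f"
  then obtain g where "g \<in> hom C (cCod C f) (cDom C f)" "cComp C g f = cId C (cDom C f)"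
    using iso_D by blast
  then show ?thesis using retraction_mono iso_arr[OF i] by blast
qed
lemma id_iso: "X \<in> cObj C \<Longrightarrow> iso C (cId C X)"
  unfolding iso_def using id_hom by (intro conjI bexI[of _ "cId C X"]) (auto simp: hom_def)

end

lemma is_kernel_op[simp]: "is_kernel (op_cat C) = is_cokernel C"
  by (intro ext) (simp add: is_cokernel_def)
lemma is_equalizer_op[simp]: "is_equalizer (op_cat C) = is_coequalizer C"
  by (intro ext) (simp add: is_coequalizer_def)
lemma has_binary_products_op[simp]: "has_binary_products (op_cat C) = has_binary_coproducts C"
  by (simp add: has_binary_coproducts_def)

context pc begin

interpretation op: pc "op_cat C" by unfold_locales (simp add: pointed)

lemma op_zero[simp]: "X \<in> cObj C \<Longrightarrow> Y \<in> cObj C \<Longrightarrow> op.zero X Y = zero Y X"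
proof -
  assume a: "X \<in> cObj C" "Y \<in> cObj C"
  have "zero_arr C (op.zero X Y)" using op.zero_is_zero_arr[of X Y] a by simp
  moreover have "op.zero X Y \<in> hom C Y X" using op.zero_hom[of X Y] a by simp
  ultimately show ?thesis by (simp add: zero_arr_iff hom_def)
qed

lemma zero_eq_arr: "f \<in> cArr C \<Longrightarrow> g \<in> cArr C \<Longrightarrow> cCod C g = cDom C f \<Longrightarrow>
   zero_arr C (cComp C f g) \<longleftrightarrow> cComp C f g = zero (cDom C g) (cCod C f)"
  by (simp add: zero_arr_iff)

lemma kernelD:
  assumes "is_kernel C k f"
  shows "k \<in> cArr C" "f \<in> cArr C" "cCod C k = cDom C f" "cComp C f k = zero (cDom C k) (cCod C f)"
proof -
  have "k \<in> cArr C \<and> f \<in> cArr C \<and> cCod C k = cDom C f \<and> zero_arr C (cComp C f k)"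
    using assms unfolding is_kernel_def by (elim conjE) (intro conjI)
  then have h: "k \<in> cArr C" "f \<in> cArr C" "cCod C k = cDom C f" "zero_arr C (cComp C f k)" by auto
  then show "k \<in> cArr C" "f \<in> cArr C" "cCod C k = cDom C f" by auto
  show "cComp C f k = zero (cDom C k) (cCod C f)" using h zero_eq_arr by blast
qed

lemma kernel_factor:
  assumes "is_kernel C k f" "g \<in> hom C T (cDom C f)" "cComp C f g = zero T (cCod C f)"
  shows "\<exists>u \<in> hom C T (cDom C k). cComp C k u = g"
proof -
  have all: "\<forall>g \<in> cArr C. cCod C g = cDom C f \<and> zero_arr C (cComp C f g) \<longrightarrow>
        (\<exists>!u. u \<in> hom C (cDom C g) (cDom C k) \<and> cComp C k u = g)"
    using assms(1) unfolding is_kernel_def by (elim conjE)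
  have g: "g \<in> cArr C" "cDom C g = T" "cCod C g = cDom C f" using assms(2) by (auto simp: hom_def)
  have "zero_arr C (cComp C f g)" using assms(3) g kernelD[OF assms(1)] hom_objs[OF assms(2)]
    by (simp add: zero_arr_iff)
  then have "\<exists>!u. u \<in> hom C (cDom C g) (cDom C k) \<and> cComp C k u = g" using all g by blast
  then show ?thesis using g by blast
qed

lemma kernel_mono: assumes "is_kernel C k f" shows "mono C k"
proof (rule monoI)
  show "k \<in> cArr C" using kernelD[OF assms] by blast
  fix g h T assume g: "g \<in> hom C T (cDom C k)" and h: "h \<in> hom C T (cDom C k)"
    and e: "cComp C k g = cComp C k h"
  have all: "\<forall>g \<in> cArr C. cCod C g = cDom C f \<and> zero_arr C (cComp C f g) \<longrightarrow>
        (\<exists>!u. u \<in> hom C (cDom C g) (cDom C k) \<and> cComp C k u = g)"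
    using assms(1) unfolding is_kernel_def by (elim conjE)
  note kd = kernelD[OF assms]
  have x: "cComp C k g \<in> cArr C" "cCod C (cComp C k g) = cDom C f" "cDom C (cComp C k g) = T"
    using g kd by (auto simp: hom_def)
  have "cComp C f (cComp C k g) = zero T (cCod C f)" using g kd by (simp add: hom_def)
  moreover have "zero_arr C (zero T (cCod C f))" using hom_objs[OF g] kd by simp
  ultimately have "zero_arr C (cComp C f (cComp C k g))" by simp
  then have "\<exists>!u. u \<in> hom C (cDom C (cComp C k g)) (cDom C k) \<and> cComp C k u = cComp C k g"
    using all x(1,2) by blast
  then show "g = h" using g h e x(3) by auto
qed

lemma kernelI:
  assumes "k \<in> cArr C" "f \<in> cArr C" "cCod C k = cDom C f" "cComp C f k = zero (cDom C k) (cCod C f)"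
    "mono C k" "\<And>g T. g \<in> hom C T (cDom C f) \<Longrightarrow> cComp C f g = zero T (cCod C f) \<Longrightarrow>
       \<exists>u \<in> hom C T (cDom C k). cComp C k u = g"
  shows "is_kernel C k f"
  unfolding is_kernel_def
proof (intro conjI assms(1-3) ballI impI)
  show "zero_arr C (cComp C f k)" using assms by (simp add: zero_arr_iff)
  fix g assume g: "g \<in> cArr C" "cCod C g = cDom C f \<and> zero_arr C (cComp C f g)"
  then have "cComp C f g = zero (cDom C g) (cCod C f)" using assms zero_eq_arr by auto
  then obtain u where u: "u \<in> hom C (cDom C g) (cDom C k)" "cComp C k u = g"
    using assms(6)[of g "cDom C g"] g by (auto simp: hom_def)
  show "\<exists>!u. u \<in> hom C (cDom C g) (cDom C k) \<and> cComp C k u = g"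
  proof (rule ex1I[of _ u])
    show "u \<in> hom C (cDom C g) (cDom C k) \<and> cComp C k u = g" using u by blast
    fix v assume "v \<in> hom C (cDom C g) (cDom C k) \<and> cComp C k v = g"
    then show "v = u" using u by (intro monoD[OF assms(5), of v "cDom C g" u]) auto
  qed
qed

end

context pc begin

interpretation op: pc "op_cat C" by unfold_locales (simp add: pointed)

lemma cokernelD:
  assumes "is_cokernel C q f"
  shows "q \<in> cArr C" "f \<in> cArr C" "cDom C q = cCod C f" "cComp C q f = zero (cDom C f) (cCod C q)"
proof -
  have k: "is_kernel (op_cat C) q f" using assms by simp
  note h = op.kernelD[OF k]
  show "q \<in> cArr C" "f \<in> cArr C" "cDom C q = cCod C f" using h by auto
  show "cComp C q f = zero (cDom C f) (cCod C q)" using h by simp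
qed

lemma cokernel_factor:
  assumes "is_cokernel C q f" "g \<in> hom C (cCod C f) T" "cComp C g f = zero (cDom C f) T"
  shows "\<exists>u \<in> hom C (cCod C q) T. cComp C u q = g"
proof -
  have k: "is_kernel (op_cat C) q f" using assms by simp
  have T: "T \<in> cObj C" using assms(2) hom_objs by blast
  have f: "f \<in> cArr C" using cokernelD[OF assms(1)] by blast
  have f': "cDom C f \<in> cObj C" using f by simp
  have eq: "cComp (op_cat C) f g = op.zero T (cCod (op_cat C) f)" using assms(3) T f' by simp
  have gh: "g \<in> hom (op_cat C) T (cDom (op_cat C) f)" using assms(2) by simp
  from op.kernel_factor[OF k gh eq] show ?thesis by simp
qed

lemma cokernel_epi: "is_cokernel C q f \<Longrightarrow> epi C q"
  using op.kernel_mono[of q f] by simp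

lemma cokernelI:
  assumes "q \<in> cArr C" "f \<in> cArr C" "cDom C q = cCod C f" "cComp C q f = zero (cDom C f) (cCod C q)"
    "epi C q" "\<And>g T. g \<in> hom C (cCod C f) T \<Longrightarrow> cComp C g f = zero (cDom C f) T \<Longrightarrow>
       \<exists>u \<in> hom C (cCod C q) T. cComp C u q = g"
  shows "is_cokernel C q f"
proof -
  have "is_kernel (op_cat C) q f"
  proof (rule op.kernelI)
    fix g T assume g: "g \<in> hom (op_cat C) T (cDom (op_cat C) f)"
      and e: "cComp (op_cat C) f g = op.zero T (cCod (op_cat C) f)"
    have T: "T \<in> cObj C" using g hom_objs by simp
    have f': "cDom C f \<in> cObj C" using assms(2) by simp
    show "\<exists>u \<in> hom (op_cat C) T (cDom (op_cat C) q). cComp (op_cat C) q u = g"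
      using assms(6)[of g T] g e T f' by (auto simp: hom_def)
  qed (use assms in simp_all)
  then show ?thesis by simp
qed

end

lemma ex1_eq: "\<exists>!x. P x \<Longrightarrow> P a \<Longrightarrow> P b \<Longrightarrow> a = b" by blast

context pc begin

lemma normal_kernel_coker:
  assumes "normal_mono C m" "is_cokernel C q m" shows "is_kernel C m q"
proof -
  obtain g where g: "is_kernel C m g" using assms(1) unfolding normal_mono_def by blast
  note kg = kernelD[OF g] and cq = cokernelD[OF assms(2)]
  show ?thesis
  proof (rule kernelI)
    show "m \<in> cArr C" "q \<in> cArr C" "cCod C m = cDom C q"
      "cComp C q m = zero (cDom C m) (cCod C q)" using kg cq by auto
    show "mono C m" using kernel_mono[OF g] .
    fix x T assume x: "x \<in> hom C T (cDom C q)" "cComp C q x = zero T (cCod C q)"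
    obtain u where u: "u \<in> hom C (cCod C q) (cCod C g)" "cComp C u q = g"
      using cokernel_factor[OF assms(2), of g "cCod C g"] kg cq by (auto simp: hom_def)
    have T: "T \<in> cObj C" using x hom_objs by blast
    have "cComp C g x = cComp C (cComp C u q) x" using u(2) by simp
    also have "\<dots> = cComp C u (cComp C q x)" by (rule assoc) (use u x cq in \<open>auto simp: hom_def\<close>)
    also have "\<dots> = zero T (cCod C g)" using x(2) u T cq by (simp add: hom_def)
    finally have "cComp C g x = zero T (cCod C g)" .
    then show "\<exists>v \<in> hom C T (cDom C m). cComp C m v = x"
      using kernel_factor[OF g, of x T] x kg cq by (simp add: hom_def)
  qed
qed

definition tup where
  "tup p1 p2 f g = (THE u. u \<in> hom C (cDom C f) (cDom C p1) \<and> cComp C p1 u = f \<and> cComp C p2 u = g)"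

lemma prodD: "is_product C P p1 p2 A B \<Longrightarrow> p1 \<in> hom C P A \<and> p2 \<in> hom C P B"
  unfolding is_product_def by (elim conjE) (intro conjI)

lemma prod_univ: "is_product C P p1 p2 A B \<Longrightarrow> f1 \<in> hom C T A \<Longrightarrow> f2 \<in> hom C T B \<Longrightarrow>
   \<exists>!u. u \<in> hom C T P \<and> cComp C p1 u = f1 \<and> cComp C p2 u = f2"
proof -
  assume a: "is_product C P p1 p2 A B" "f1 \<in> hom C T A" "f2 \<in> hom C T B"
  have T: "T \<in> cObj C" using a(2) hom_objs by blast
  have "\<forall>T \<in> cObj C. \<forall>f1 \<in> hom C T A. \<forall>f2 \<in> hom C T B.
        \<exists>!u. u \<in> hom C T P \<and> cComp C p1 u = f1 \<and> cComp C p2 u = f2"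
    using a(1) unfolding is_product_def by (elim conjE)
  then show ?thesis using T a(2,3) by blast
qed

lemma tup:
  assumes "is_product C P p1 p2 A B" "f \<in> hom C T A" "g \<in> hom C T B"
  shows "tup p1 p2 f g \<in> hom C T P" "cComp C p1 (tup p1 p2 f g) = f" "cComp C p2 (tup p1 p2 f g) = g"
proof -
  have d: "cDom C f = T" "cDom C p1 = P" using assms prodD[OF assms(1)] by (auto simp: hom_def)
  have "tup p1 p2 f g \<in> hom C T P \<and> cComp C p1 (tup p1 p2 f g) = f \<and> cComp C p2 (tup p1 p2 f g) = g"
    unfolding tup_def d using prod_univ[OF assms] by (rule theI')
  then show "tup p1 p2 f g \<in> hom C T P" "cComp C p1 (tup p1 p2 f g) = f" "cComp C p2 (tup p1 p2 f g) = g"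
    by auto
qed

lemma prod_ext:
  assumes "is_product C P p1 p2 A B" "u \<in> hom C T P" "v \<in> hom C T P"
    "cComp C p1 u = cComp C p1 v" "cComp C p2 u = cComp C p2 v"
  shows "u = v"
proof -
  have p: "p1 \<in> hom C P A" "p2 \<in> hom C P B" using prodD[OF assms(1)] by auto
  have "cComp C p1 u \<in> hom C T A" "cComp C p2 u \<in> hom C T B" using p assms(2) comp_hom by blast+
  from prod_univ[OF assms(1) this] show ?thesis
    by (rule ex1_eq) (use assms in auto)
qed

lemma prod_sym: "is_product C P p1 p2 A B \<Longrightarrow> is_product C P p2 p1 B A"
proof -
  assume a: "is_product C P p1 p2 A B"
  show ?thesis unfolding is_product_def
  proof (intro conjI ballI)
    show "p2 \<in> hom C P B" "p1 \<in> hom C P A" using prodD[OF a] by auto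
    fix T f1 f2 assume "T \<in> cObj C" "f1 \<in> hom C T B" "f2 \<in> hom C T A"
    from prod_univ[OF a this(3,2)]
    show "\<exists>!u. u \<in> hom C T P \<and> cComp C p2 u = f1 \<and> cComp C p1 u = f2" by blast
  qed
qed

lemma prod_kernel:
  assumes "is_product C P p1 p2 A B"
  shows "is_kernel C (tup p1 p2 (zero B A) (cId C B)) p1"
proof -
  have p: "p1 \<in> hom C P A" "p2 \<in> hom C P B" using prodD[OF assms] by auto
  have AB: "A \<in> cObj C" "B \<in> cObj C" using p hom_objs by blast+
  let ?k = "tup p1 p2 (zero B A) (cId C B)"
  have k: "?k \<in> hom C B P" "cComp C p1 ?k = zero B A" "cComp C p2 ?k = cId C B"
    using tup[OF assms, of "zero B A" B "cId C B"] zero_hom id_hom AB by auto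
  show ?thesis
  proof (rule kernelI)
    show "?k \<in> cArr C" "p1 \<in> cArr C" "cCod C ?k = cDom C p1" "cComp C p1 ?k = zero (cDom C ?k) (cCod C p1)"
      using k p by (auto simp: hom_def)
    show "mono C ?k" using retraction_mono[of ?k p2] k p by (auto simp: hom_def)
    fix g T assume g: "g \<in> hom C T (cDom C p1)" "cComp C p1 g = zero T (cCod C p1)"
    have T: "T \<in> cObj C" using g hom_objs by blast
    have g2: "cComp C p2 g \<in> hom C T B" using g p comp_hom by (auto simp: hom_def)
    have "cComp C ?k (cComp C p2 g) = g"
    proof (rule prod_ext[OF assms])
      show "cComp C ?k (cComp C p2 g) \<in> hom C T P" using k g2 comp_hom by blast
      show "g \<in> hom C T P" using g p by (simp add: hom_def)
      show "cComp C p1 (cComp C ?k (cComp C p2 g)) = cComp C p1 g"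
        using k g2 g p T AB by (simp add: hom_def)
      show "cComp C p2 (cComp C ?k (cComp C p2 g)) = cComp C p2 g"
        using k g2 g p T by (simp add: hom_def)
    qed
    then show "\<exists>u \<in> hom C T (cDom C ?k). cComp C ?k u = g" using g2 k by (auto simp: hom_def)
  qed
qed

lemma epi_triv:
  assumes prods: "has_binary_products C" and nm: "\<forall>m. mono C m \<longrightarrow> normal_mono C m"
    and t: "t \<in> cArr C"
    and H: "\<And>h. h \<in> cArr C \<Longrightarrow> cDom C h = cCod C t \<Longrightarrow>
              cComp C h t = zero (cDom C t) (cCod C h) \<Longrightarrow> h = zero (cCod C t) (cCod C h)"
  shows "epi C t"
proof (rule epiI[OF t])
  fix g1 g2 W assume g1: "g1 \<in> hom C (cCod C t) W" and g2: "g2 \<in> hom C (cCod C t) W"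
    and e: "cComp C g1 t = cComp C g2 t"
  have W: "W \<in> cObj C" using g1 hom_objs by blast
  obtain P p1 p2 where P: "is_product C P p1 p2 W W" using prods W unfolding has_binary_products_def by blast
  have p: "p1 \<in> hom C P W" "p2 \<in> hom C P W" using prodD[OF P] by auto
  define D where "D = tup p1 p2 (cId C W) (cId C W)"
  have D: "D \<in> hom C W P" "cComp C p1 D = cId C W" "cComp C p2 D = cId C W"
    unfolding D_def using tup[OF P] id_hom[OF W] by auto
  have "mono C D" using retraction_mono[of D p1] D p by (auto simp: hom_def)
  then obtain c where c: "is_kernel C D c" using nm unfolding normal_mono_def by blast
  note kc = kernelD[OF c]
  define u where "u = tup p1 p2 g1 g2"
  have u: "u \<in> hom C (cCod C t) P" "cComp C p1 u = g1" "cComp C p2 u = g2"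
    unfolding u_def using tup[OF P g1 g2] by auto
  have ut: "cComp C u t = cComp C D (cComp C g1 t)"
  proof (rule prod_ext[OF P])
    show "cComp C u t \<in> hom C (cDom C t) P" using u t by (auto simp: hom_def)
    show "cComp C D (cComp C g1 t) \<in> hom C (cDom C t) P" using D g1 t by (auto simp: hom_def)
    show "cComp C p1 (cComp C u t) = cComp C p1 (cComp C D (cComp C g1 t))"
      using u D g1 t p by (simp add: hom_def)
    show "cComp C p2 (cComp C u t) = cComp C p2 (cComp C D (cComp C g1 t))"
      using u D g1 g2 t p e by (simp add: hom_def)
  qed
  have cu: "cComp C c u \<in> cArr C" "cDom C (cComp C c u) = cCod C t" using u kc D by (auto simp: hom_def)
  have "cComp C (cComp C c u) t = cComp C c (cComp C u t)"
    by (rule assoc) (use u kc D t in \<open>auto simp: hom_def\<close>)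
  also have "\<dots> = cComp C c (cComp C D (cComp C g1 t))" using ut by simp
  also have "\<dots> = zero (cDom C t) (cCod C c)" using kc D g1 t by (simp add: hom_def)
  finally have "cComp C c u = zero (cCod C t) (cCod C c)"
    using H[OF cu] cu kc D u by (simp add: hom_def)
  then obtain w where w: "w \<in> hom C (cCod C t) W" "cComp C D w = u"
    using kernel_factor[OF c, of u "cCod C t"] u kc D by (auto simp: hom_def)
  have "g1 = cComp C p1 (cComp C D w)" using u(2) w(2) by simp
  also have "\<dots> = w" using D w(1) p by (simp add: hom_def)
  finally have "g1 = w" .
  moreover have "g2 = cComp C p2 (cComp C D w)" using u(3) w(2) by simp
  moreover have "\<dots> = w" using D w(1) p by (simp add: hom_def)
  ultimately show "g1 = g2" by simp
qed

lemma mono_epi_iso: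
  assumes "normal_mono C m" "epi C m" shows "iso C m"
proof -
  obtain g where g: "is_kernel C m g" using assms(1) unfolding normal_mono_def by blast
  note kg = kernelD[OF g]
  have g0: "g = zero (cCod C m) (cCod C g)"
  proof (rule epiD[OF assms(2)])
    show "g \<in> hom C (cCod C m) (cCod C g)" using kg by (simp add: hom_def)
    show "zero (cCod C m) (cCod C g) \<in> hom C (cCod C m) (cCod C g)" using kg zero_hom by simp
    show "cComp C g m = cComp C (zero (cCod C m) (cCod C g)) m" using kg by simp
  qed
  have "cComp C g (cId C (cCod C m)) = zero (cCod C m) (cCod C g)" using g0 kg by simp
  then obtain u where u: "u \<in> hom C (cCod C m) (cDom C m)" "cComp C m u = cId C (cCod C m)"
    using kernel_factor[OF g, of "cId C (cCod C m)" "cCod C m"] kg by (auto simp: hom_def)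
  have "cComp C u m = cId C (cDom C m)"
  proof (rule monoD[OF kernel_mono[OF g]])
    show "cComp C u m \<in> hom C (cDom C m) (cDom C m)" "cId C (cDom C m) \<in> hom C (cDom C m) (cDom C m)"
      using u kg by (auto simp: hom_def)
    have "cComp C m (cComp C u m) = cComp C (cComp C m u) m" using u kg by (simp add: hom_def)
    also have "\<dots> = m" using u kg by simp
    finally show "cComp C m (cComp C u m) = cComp C m (cId C (cDom C m))" using kg by simp
  qed
  then show ?thesis unfolding iso_def using u kg by blast
qed

end

context pc begin

interpretation op: pc "op_cat C" by unfold_locales (simp add: pointed)

lemma normal_coker_kernel:
  assumes "normal_epi C e" "is_kernel C k e" shows "is_cokernel C e k"
  using op.normal_kernel_coker[of e k] assms by simp

lemma mono_triv:
  assumes coprods: "has_binary_coproducts C" and ne: "\<forall>e. epi C e \<longrightarrow> normal_epi C e"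
    and t: "t \<in> cArr C"
    and H: "\<And>z. z \<in> cArr C \<Longrightarrow> cCod C z = cDom C t \<Longrightarrow>
              cComp C t z = zero (cDom C z) (cCod C t) \<Longrightarrow> z = zero (cDom C z) (cDom C t)"
  shows "mono C t"
proof -
  have "epi (op_cat C) t"
  proof (rule op.epi_triv)
    show "has_binary_products (op_cat C)" using coprods by simp
    show "\<forall>m. mono (op_cat C) m \<longrightarrow> normal_mono (op_cat C) m" using ne by simp
    show "t \<in> cArr (op_cat C)" using t by simp
    fix h assume h: "h \<in> cArr (op_cat C)" "cDom (op_cat C) h = cCod (op_cat C) t"
      "cComp (op_cat C) h t = op.zero (cDom (op_cat C) t) (cCod (op_cat C) h)"
    have o: "cDom C t \<in> cObj C" "cCod C t \<in> cObj C" "cDom C h \<in> cObj C" using t h by auto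
    have "h = zero (cDom C h) (cDom C t)" using H[of h] h o by simp
    then show "h = op.zero (cCod (op_cat C) t) (cCod (op_cat C) h)" using o by simp
  qed
  then show ?thesis by simp
qed

end

context pc begin

lemma kernel_equalizer:
  assumes "is_kernel C m g" shows "is_equalizer C m g (zero (cDom C g) (cCod C g))"
proof -
  note kg = kernelD[OF assms]
  have o: "cDom C g \<in> cObj C" "cCod C g \<in> cObj C" "cDom C m \<in> cObj C" using kg by auto
  show ?thesis unfolding is_equalizer_def
  proof (intro conjI ballI impI)
    show "m \<in> cArr C" "g \<in> cArr C" "zero (cDom C g) (cCod C g) \<in> cArr C"
      "cDom C g = cDom C (zero (cDom C g) (cCod C g))" "cCod C g = cCod C (zero (cDom C g) (cCod C g))"
      "cCod C m = cDom C g" "cComp C g m = cComp C (zero (cDom C g) (cCod C g)) m"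
      using kg o by auto
    fix h assume h: "h \<in> cArr C" "cCod C h = cDom C g \<and> cComp C g h = cComp C (zero (cDom C g) (cCod C g)) h"
    have e: "cComp C g h = zero (cDom C h) (cCod C g)" using h o by simp
    obtain u where u: "u \<in> hom C (cDom C h) (cDom C m)" "cComp C m u = h"
      using kernel_factor[OF assms, of h "cDom C h"] h e by (auto simp: hom_def)
    show "\<exists>!u. u \<in> hom C (cDom C h) (cDom C m) \<and> cComp C m u = h"
    proof (rule ex1I[of _ u])
      show "u \<in> hom C (cDom C h) (cDom C m) \<and> cComp C m u = h" using u by blast
      fix v assume "v \<in> hom C (cDom C h) (cDom C m) \<and> cComp C m v = h"
      then show "v = u" using u by (intro monoD[OF kernel_mono[OF assms], of v "cDom C h" u]) auto
    qed
  qed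
qed

lemma equalizer_mono: assumes "is_equalizer C e f g" shows "mono C e"
proof (rule monoI)
  have all: "\<forall>h \<in> cArr C. cCod C h = cDom C f \<and> cComp C f h = cComp C g h \<longrightarrow>
        (\<exists>!u. u \<in> hom C (cDom C h) (cDom C e) \<and> cComp C e u = h)"
    using assms unfolding is_equalizer_def by (elim conjE)
  have b0: "e \<in> cArr C \<and> f \<in> cArr C \<and> g \<in> cArr C \<and> cDom C f = cDom C g \<and> cCod C f = cCod C g \<and>
      cCod C e = cDom C f \<and> cComp C f e = cComp C g e"
    using assms unfolding is_equalizer_def by (elim conjE) (intro conjI)
  then have b: "e \<in> cArr C" "f \<in> cArr C" "g \<in> cArr C" "cDom C f = cDom C g" "cCod C f = cCod C g"
      "cCod C e = cDom C f" "cComp C f e = cComp C g e" by auto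
  show "e \<in> cArr C" using b by simp
  fix x y T assume x: "x \<in> hom C T (cDom C e)" and y: "y \<in> hom C T (cDom C e)"
    and xy: "cComp C e x = cComp C e y"
  have h: "cComp C e x \<in> cArr C" "cCod C (cComp C e x) = cDom C f" "cDom C (cComp C e x) = T"
    using x b by (auto simp: hom_def)
  have "cComp C f (cComp C e x) = cComp C g (cComp C e x)"
  proof -
    have "cComp C f (cComp C e x) = cComp C (cComp C f e) x" using x b by (simp add: hom_def)
    also have "\<dots> = cComp C (cComp C g e) x" using b by simp
    also have "\<dots> = cComp C g (cComp C e x)" using x b by (simp add: hom_def)
    finally show ?thesis .
  qed
  then have "\<exists>!u. u \<in> hom C (cDom C (cComp C e x)) (cDom C e) \<and> cComp C e u = cComp C e x"
    using all h(1,2) by blast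
  then have "\<exists>!u. u \<in> hom C T (cDom C e) \<and> cComp C e u = cComp C e x" by (simp only: h(3))
  then show "x = y" by (rule ex1_eq) (use x y xy in auto)
qed

lemma regular_mono_mono: "regular_mono C m \<Longrightarrow> mono C m"
  unfolding regular_mono_def using equalizer_mono by blast

lemma normal_regular_mono: "normal_mono C m \<Longrightarrow> regular_mono C m"
  unfolding normal_mono_def regular_mono_def using kernel_equalizer by blast

lemma reg_inj_complete: assumes "regular_injective_obj C X" shows "complete_obj C X"
proof -
  have X: "X \<in> cObj C" and inj: "\<forall>m f. regular_mono C m \<and> f \<in> hom C (cDom C m) X \<longrightarrow>
        (\<exists>g \<in> hom C (cCod C m) X. cComp C g m = f)"
    using assms unfolding regular_injective_obj_def injective_wrt_def by auto
  show ?thesis unfolding complete_obj_def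
  proof (intro conjI X allI impI)
    fix m assume m: "normal_mono C m \<and> cDom C m = X"
    then have r: "regular_mono C m" using normal_regular_mono by blast
    have ma: "m \<in> cArr C" using mono_arr regular_mono_mono r by blast
    have "cId C X \<in> hom C (cDom C m) X" using m id_hom X by simp
    then obtain g where g: "g \<in> hom C (cCod C m) X" "cComp C g m = cId C X" using inj r by blast
    then have "is_retraction C g m" unfolding is_retraction_def using m ma by simp
    then show "split_mono C m" unfolding split_mono_def using ma by blast
  qed
qed

lemma inj_reg_inj: "injective_obj C X \<Longrightarrow> regular_injective_obj C X"
  unfolding injective_obj_def regular_injective_obj_def injective_wrt_def
  using regular_mono_mono by blast

lemma zero_strong_complete: assumes "zero_obj C X" shows "strong_complete_obj C X"
  unfolding strong_complete_obj_def
proof (intro conjI allI impI)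
  show X: "X \<in> cObj C" using zero_obj_obj[OF assms] .
  fix m assume m: "protosplit_mono C m \<and> cDom C m = X"
  then obtain p where "is_kernel C m p" unfolding protosplit_mono_def by blast
  then have ma: "m \<in> cArr C" using kernelD by blast
  have c: "cCod C m \<in> cObj C" using ma by simp
  let ?r = "zero (cCod C m) X"
  have r: "?r \<in> hom C (cCod C m) X" using zero_hom c X by blast
  have "cComp C ?r m \<in> hom C X X" using r m ma by (auto simp: hom_def)
  then have "cComp C ?r m = zero X X" using zero_obj_from[OF assms] by blast
  moreover have "cId C X = zero X X" using zero_obj_from[OF assms] id_hom[OF X] by blast
  ultimately have "is_retraction C ?r m" unfolding is_retraction_def using r m ma by simp
  moreover have "\<And>r'. is_retraction C r' m \<Longrightarrow> r' = ?r"
    unfolding is_retraction_def using zero_obj_to[OF assms] m by auto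
  ultimately show "\<exists>!r. is_retraction C r m" by blast
qed

end

locale ab = pc +
  assumes ab: "abelian C"
begin

lemma prods: "has_binary_products C" using ab unfolding abelian_def by blast
lemma coprods: "has_binary_coproducts C" using ab unfolding abelian_def by blast
lemma nm: "\<forall>m. mono C m \<longrightarrow> normal_mono C m" using ab unfolding abelian_def by blast
lemma ne: "\<forall>e. epi C e \<longrightarrow> normal_epi C e" using ab unfolding abelian_def by blast
lemma kerex: "f \<in> cArr C \<Longrightarrow> \<exists>k. is_kernel C k f" using ab unfolding abelian_def by blast
lemma cokerex: "f \<in> cArr C \<Longrightarrow> \<exists>q. is_cokernel C q f" using ab unfolding abelian_def by blast

lemma mono_t:
  assumes "t \<in> cArr C"
    "\<And>z. z \<in> cArr C \<Longrightarrow> cCod C z = cDom C t \<Longrightarrow>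
              cComp C t z = zero (cDom C z) (cCod C t) \<Longrightarrow> z = zero (cDom C z) (cDom C t)"
  shows "mono C t"
  using mono_triv[OF coprods ne assms] .

lemma epi_t:
  assumes "t \<in> cArr C"
    "\<And>h. h \<in> cArr C \<Longrightarrow> cDom C h = cCod C t \<Longrightarrow>
              cComp C h t = zero (cDom C t) (cCod C h) \<Longrightarrow> h = zero (cCod C t) (cCod C h)"
  shows "epi C t"
  using epi_triv[OF prods nm assms] .

lemma iso_me: "mono C m \<Longrightarrow> epi C m \<Longrightarrow> iso C m"
  using mono_epi_iso nm by blast

lemma ab_proto:
  assumes k: "is_kernel C m p" and s: "s \<in> hom C (cCod C p) (cDom C p)"
    and ps: "cComp C p s = cId C (cCod C p)"
  shows "split_mono C m"
proof -
  note kp = kernelD[OF k]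
  define A where "A = cDom C p"
  define B where "B = cCod C p"
  define K where "K = cDom C m"
  have o: "A \<in> cObj C" "B \<in> cObj C" "K \<in> cObj C" using kp unfolding A_def B_def K_def by auto
  have mh: "m \<in> hom C K A" using kp unfolding K_def A_def hom_def by simp
  have ph: "p \<in> hom C A B" using kp unfolding A_def B_def hom_def by simp
  have sh: "s \<in> hom C B A" using s unfolding A_def B_def .
  have pm: "cComp C p m = zero K B" using kp unfolding K_def B_def by simp
  have ps': "cComp C p s = cId C B" using ps unfolding B_def .
  obtain q where q: "is_cokernel C q s" using cokerex sh by (auto simp: hom_def)
  note cq = cokernelD[OF q]
  define Q where "Q = cCod C q"
  have qh: "q \<in> hom C A Q" using cq sh unfolding Q_def hom_def by simp
  have Qo: "Q \<in> cObj C" using qh hom_objs by blast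
  have qs: "cComp C q s = zero B Q" using cq sh unfolding Q_def by (simp add: hom_def)
  have "mono C s" using retraction_mono[of s p] sh ph ps' by (simp add: hom_def)
  then have sk: "is_kernel C s q" using normal_kernel_coker q nm by blast
  have "epi C p" using section_epi[of p s] sh ph ps' by (simp add: hom_def)
  then have pc: "is_cokernel C p m" using normal_coker_kernel k ne by blast
  define t where "t = cComp C q m"
  have th: "t \<in> hom C K Q" unfolding t_def using qh mh comp_hom by blast
  have "mono C t"
  proof (rule mono_t)
    show "t \<in> cArr C" using th by (simp add: hom_def)
    fix z assume z: "z \<in> cArr C" "cCod C z = cDom C t" "cComp C t z = zero (cDom C z) (cCod C t)"
    define Z where "Z = cDom C z"
    have zh: "z \<in> hom C Z K" using z th unfolding Z_def by (simp add: hom_def)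
    have Zo: "Z \<in> cObj C" using zh hom_objs by blast
    have mz: "cComp C m z \<in> hom C Z A" using mh zh comp_hom by blast
    have "cComp C q (cComp C m z) = cComp C t z" unfolding t_def using qh mh zh by (simp add: hom_def)
    also have "\<dots> = zero Z Q" using z th unfolding Z_def by (simp add: hom_def)
    finally have "cComp C q (cComp C m z) = zero Z (cCod C q)" unfolding Q_def .
    then obtain w where w: "w \<in> hom C Z B" "cComp C s w = cComp C m z"
      using kernel_factor[OF sk, of "cComp C m z" Z] mz cq sh qh by (auto simp: hom_def)
    have "w = cComp C p (cComp C s w)" using w(1) ph sh ps' by (simp add: hom_def)
    also have "\<dots> = cComp C p (cComp C m z)" using w(2) by simp
    also have "\<dots> = zero Z B" using ph mh zh pm o by (simp add: hom_def)
    finally have w0: "w = zero Z B" .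
    have "cComp C m z = cComp C s w" using w(2) by simp
    also have "\<dots> = zero Z A" using w0 sh Zo by (simp add: hom_def)
    also have "\<dots> = cComp C m (zero Z K)" using mh Zo o by (simp add: hom_def)
    finally have "cComp C m z = cComp C m (zero Z K)" .
    then have "z = zero Z K"
      by (rule monoD[OF kernel_mono[OF k], rotated 2]) (use zh Zo o in \<open>auto simp: K_def zero_hom\<close>)
    then show "z = zero (cDom C z) (cDom C t)" using th unfolding Z_def by (simp add: hom_def)
  qed
  moreover have "epi C t"
  proof (rule epi_t)
    show "t \<in> cArr C" using th by (simp add: hom_def)
    fix h assume h: "h \<in> cArr C" "cDom C h = cCod C t" "cComp C h t = zero (cDom C t) (cCod C h)"
    define Y where "Y = cCod C h"
    have hh: "h \<in> hom C Q Y" using h th unfolding Y_def by (simp add: hom_def)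
    have Yo: "Y \<in> cObj C" using hh hom_objs by blast
    have hq: "cComp C h q \<in> hom C A Y" using hh qh comp_hom by blast
    have "cComp C (cComp C h q) m = cComp C h t" unfolding t_def using hh qh mh by (simp add: hom_def)
    also have "\<dots> = zero K Y" using h th unfolding Y_def by (simp add: hom_def)
    finally have "cComp C (cComp C h q) m = zero (cDom C m) Y" unfolding K_def .
    then obtain w where w: "w \<in> hom C B Y" "cComp C w p = cComp C h q"
      using cokernel_factor[OF pc, of "cComp C h q" Y] hq kp unfolding A_def B_def
      by (auto simp: hom_def)
    have "w = cComp C (cComp C w p) s" using w(1) ph sh ps' by (simp add: hom_def)
    also have "\<dots> = cComp C (cComp C h q) s" using w(2) by simp
    also have "\<dots> = zero B Y" using hh qh sh qs o Qo Yo by (simp add: hom_def)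
    finally have w0: "w = zero B Y" .
    have "cComp C h q = cComp C w p" using w(2) by simp
    also have "\<dots> = zero A Y" using w0 ph Yo by (simp add: hom_def)
    also have "\<dots> = cComp C (zero Q Y) q" using qh Yo Qo by (simp add: hom_def)
    finally have "cComp C h q = cComp C (zero Q Y) q" .
    then have "h = zero Q Y"
      by (rule epiD[OF cokernel_epi[OF q], rotated 2]) (use hh Yo Qo in \<open>auto simp: Q_def zero_hom\<close>)
    then show "h = zero (cCod C t) (cCod C h)" using th unfolding Y_def by (simp add: hom_def)
  qed
  ultimately have "iso C t" using iso_me by blast
  then obtain t' where t': "t' \<in> hom C Q K" "cComp C t' t = cId C K"
    using iso_D th by (fastforce simp: hom_def)
  define r where "r = cComp C t' q"
  have rh: "r \<in> hom C A K" unfolding r_def using t' qh comp_hom by blast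
  have "cComp C r m = cComp C t' t" unfolding r_def t_def using t' qh mh by (simp add: hom_def)
  then have "cComp C r m = cId C K" using t' by simp
  then have "is_retraction C r m" unfolding is_retraction_def using rh mh by (simp add: hom_def K_def)
  then show ?thesis unfolding split_mono_def using mh by (auto simp: hom_def)
qed

lemma ab_complete_inj:
  assumes cx: "complete_obj C X" shows "injective_obj C X"
proof -
  have Xo: "X \<in> cObj C" using cx unfolding complete_obj_def by blast
  have comp: "\<And>j. normal_mono C j \<Longrightarrow> cDom C j = X \<Longrightarrow> split_mono C j"
    using cx unfolding complete_obj_def by blast
  show ?thesis unfolding injective_obj_def injective_wrt_def
  proof (intro conjI Xo allI impI)
    fix m f assume mf: "mono C m \<and> f \<in> hom C (cDom C m) X"
    then have mm: "mono C m" and fh0: "f \<in> hom C (cDom C m) X" by auto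
    define A where "A = cDom C m"
    define B where "B = cCod C m"
    have ma: "m \<in> cArr C" using mono_arr mm by blast
    have mh: "m \<in> hom C A B" using ma unfolding A_def B_def hom_def by simp
    have fh: "f \<in> hom C A X" using fh0 unfolding A_def .
    have o: "A \<in> cObj C" "B \<in> cObj C" using mh hom_objs by blast+
    obtain P pB pX where P: "is_product C P pB pX B X" using prods o Xo
      unfolding has_binary_products_def by blast
    have p: "pB \<in> hom C P B" "pX \<in> hom C P X" using prodD[OF P] by auto
    have Po: "P \<in> cObj C" using p hom_objs by blast
    define n where "n = tup pB pX m f"
    have n: "n \<in> hom C A P" "cComp C pB n = m" "cComp C pX n = f"
      unfolding n_def using tup[OF P mh fh] by auto
    have "mono C n"
    proof (rule monoI)
      show "n \<in> cArr C" using n by (simp add: hom_def)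
      fix x y T assume x: "x \<in> hom C T (cDom C n)" and y: "y \<in> hom C T (cDom C n)"
        and e: "cComp C n x = cComp C n y"
      have "cComp C m x = cComp C pB (cComp C n x)" using n x p by (simp add: hom_def)
      also have "\<dots> = cComp C pB (cComp C n y)" using e by simp
      also have "\<dots> = cComp C m y" using n y p by (simp add: hom_def)
      finally show "x = y" by (rule monoD[OF mm, rotated 2]) (use x y n in \<open>auto simp: hom_def A_def\<close>)
    qed
    then obtain q where q: "is_kernel C n q" using nm unfolding normal_mono_def by blast
    note kq = kernelD[OF q]
    define Q where "Q = cCod C q"
    have qh: "q \<in> hom C P Q" using kq n unfolding Q_def hom_def by simp
    have Qo: "Q \<in> cObj C" using qh hom_objs by blast
    have qn: "cComp C q n = zero A Q" using kq n unfolding Q_def by (simp add: hom_def)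
    define i0 where "i0 = tup pB pX (zero X B) (cId C X)"
    have i0: "i0 \<in> hom C X P" "cComp C pB i0 = zero X B" "cComp C pX i0 = cId C X"
      unfolding i0_def using tup[OF P, of "zero X B" X "cId C X"] zero_hom id_hom o Xo by auto
    define j where "j = cComp C q i0"
    have jh: "j \<in> hom C X Q" unfolding j_def using qh i0 comp_hom by blast
    have "mono C j"
    proof (rule mono_t)
      show "j \<in> cArr C" using jh by (simp add: hom_def)
      fix z assume z: "z \<in> cArr C" "cCod C z = cDom C j" "cComp C j z = zero (cDom C z) (cCod C j)"
      define Z where "Z = cDom C z"
      have zh: "z \<in> hom C Z X" using z jh unfolding Z_def by (simp add: hom_def)
      have Zo: "Z \<in> cObj C" using zh hom_objs by blast
      have iz: "cComp C i0 z \<in> hom C Z P" using i0 zh comp_hom by blast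
      have "cComp C q (cComp C i0 z) = cComp C j z" unfolding j_def using qh i0 zh by (simp add: hom_def)
      also have "\<dots> = zero Z Q" using z jh unfolding Z_def by (simp add: hom_def)
      finally have "cComp C q (cComp C i0 z) = zero Z (cCod C q)" unfolding Q_def .
      then obtain a where a: "a \<in> hom C Z A" "cComp C n a = cComp C i0 z"
        using kernel_factor[OF q, of "cComp C i0 z" Z] iz n qh by (auto simp: hom_def A_def)
      have "cComp C m a = cComp C pB (cComp C n a)" using n a(1) p by (simp add: hom_def)
      also have "\<dots> = cComp C pB (cComp C i0 z)" using a(2) by simp
      also have "\<dots> = zero Z B" using i0 zh p o Xo by (simp add: hom_def)
      also have "\<dots> = cComp C m (zero Z A)" using mh Zo o by (simp add: hom_def)
      finally have "a = zero Z A"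
        by (rule monoD[OF mm, rotated 2]) (use a Zo o in \<open>auto simp: A_def zero_hom\<close>)
      have "z = cComp C pX (cComp C i0 z)" using i0 zh p by (simp add: hom_def)
      also have "\<dots> = cComp C pX (cComp C n a)" using a(2) by simp
      also have "\<dots> = cComp C f a" using n a(1) p by (simp add: hom_def)
      also have "\<dots> = zero Z X" using \<open>a = zero Z A\<close> fh Zo by (simp add: hom_def)
      finally show "z = zero (cDom C z) (cDom C j)" using jh unfolding Z_def by (simp add: hom_def)
    qed
    then have "split_mono C j" using comp nm jh by (simp add: hom_def)
    then obtain r where r: "r \<in> hom C Q X" "cComp C r j = cId C X"
      unfolding split_mono_def is_retraction_def using jh by (auto simp: hom_def)
    define rho where "rho = cComp C r q"
    have rho: "rho \<in> hom C P X" unfolding rho_def using r qh comp_hom by blast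
    have rhoi: "cComp C rho i0 = cId C X"
    proof -
      have "cComp C rho i0 = cComp C r j" unfolding rho_def j_def using r qh i0 by (simp add: hom_def)
      then show ?thesis using r by simp
    qed
    define tau where "tau = tup pB pX pB rho"
    have tau: "tau \<in> hom C P P" "cComp C pB tau = pB" "cComp C pX tau = rho"
      unfolding tau_def using tup[OF P p(1) rho] by auto
    have taui: "cComp C tau i0 = i0"
    proof (rule prod_ext[OF P])
      show "cComp C tau i0 \<in> hom C X P" "i0 \<in> hom C X P" using tau i0 comp_hom by blast+
      show "cComp C pB (cComp C tau i0) = cComp C pB i0" using tau i0 p by (simp add: hom_def)
      show "cComp C pX (cComp C tau i0) = cComp C pX i0" using tau i0 p rhoi by (simp add: hom_def)
    qed
    have "mono C tau"
    proof (rule mono_t)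
      show "tau \<in> cArr C" using tau by (simp add: hom_def)
      fix z assume z: "z \<in> cArr C" "cCod C z = cDom C tau" "cComp C tau z = zero (cDom C z) (cCod C tau)"
      define Z where "Z = cDom C z"
      have zh: "z \<in> hom C Z P" using z tau unfolding Z_def by (simp add: hom_def)
      have Zo: "Z \<in> cObj C" using zh hom_objs by blast
      have tz: "cComp C tau z = zero Z P" using z tau unfolding Z_def by (simp add: hom_def)
      have "cComp C pB z = cComp C pB (cComp C tau z)" using tau zh p by (simp add: hom_def)
      also have "\<dots> = zero Z B" using tz p Zo Po by (simp add: hom_def)
      finally have bz: "cComp C pB z = zero Z B" .
      have "cComp C rho z = cComp C pX (cComp C tau z)" using tau zh p by (simp add: hom_def)
      also have "\<dots> = zero Z X" using tz p Zo Po by (simp add: hom_def)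
      finally have rz: "cComp C rho z = zero Z X" .
      have xz: "cComp C pX z \<in> hom C Z X" using p zh comp_hom by blast
      have zi: "z = cComp C i0 (cComp C pX z)"
      proof (rule prod_ext[OF P])
        show "z \<in> hom C Z P" "cComp C i0 (cComp C pX z) \<in> hom C Z P" using zh i0 xz comp_hom by blast+
        show "cComp C pB z = cComp C pB (cComp C i0 (cComp C pX z))"
          using bz i0 xz p o Xo by (simp add: hom_def)
        show "cComp C pX z = cComp C pX (cComp C i0 (cComp C pX z))" using i0 xz p by (simp add: hom_def)
      qed
      have "cComp C pX z = cComp C rho (cComp C i0 (cComp C pX z))" using rhoi i0 xz rho by (simp add: hom_def)
      also have "\<dots> = cComp C rho z" using zi by simp
      finally have "cComp C pX z = zero Z X" using rz by simp
      then have "z = cComp C i0 (zero Z X)" using zi by simp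
      also have "\<dots> = zero Z P" using i0 Zo by (simp add: hom_def)
      finally show "z = zero (cDom C z) (cDom C tau)" using tau unfolding Z_def by (simp add: hom_def)
    qed
    moreover have "epi C tau"
    proof (rule epi_t)
      show "tau \<in> cArr C" using tau by (simp add: hom_def)
      fix h assume h: "h \<in> cArr C" "cDom C h = cCod C tau" "cComp C h tau = zero (cDom C tau) (cCod C h)"
      define Y where "Y = cCod C h"
      have hh: "h \<in> hom C P Y" using h tau unfolding Y_def by (simp add: hom_def)
      have Yo: "Y \<in> cObj C" using hh hom_objs by blast
      have ht: "cComp C h tau = zero P Y" using h tau unfolding Y_def by (simp add: hom_def)
      have ki: "is_kernel C i0 pB" using prod_kernel[OF P] unfolding i0_def .
      define e1 where "e1 = tup pB pX (cId C B) (zero B X)"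
      have e1: "e1 \<in> hom C B P" "cComp C pB e1 = cId C B"
        unfolding e1_def using tup[OF P, of "cId C B" B "zero B X"] zero_hom id_hom o Xo by auto
      have "epi C pB" using section_epi[of pB e1] e1 p by (simp add: hom_def)
      then have cpb: "is_cokernel C pB i0" using normal_coker_kernel ki ne by blast
      have "cComp C h i0 = cComp C h (cComp C tau i0)" using taui by simp
      also have "\<dots> = cComp C (cComp C h tau) i0" using hh tau i0 by (simp add: hom_def)
      also have "\<dots> = zero X Y" using ht i0 Yo by (simp add: hom_def)
      finally have "cComp C h i0 = zero (cDom C i0) Y" using i0 by (simp add: hom_def)
      then obtain w where w: "w \<in> hom C B Y" "cComp C w pB = h"
        using cokernel_factor[OF cpb, of h Y] hh i0 p by (auto simp: hom_def)
      have "h = cComp C w pB" using w(2) by simp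
      also have "\<dots> = cComp C w (cComp C pB tau)" using tau by simp
      also have "\<dots> = cComp C (cComp C w pB) tau" using w(1) p tau(1) by (simp add: hom_def)
      also have "\<dots> = cComp C h tau" using w(2) by simp
      also have "\<dots> = zero P Y" using ht .
      finally show "h = zero (cCod C tau) (cCod C h)" using tau unfolding Y_def by (simp add: hom_def)
    qed
    ultimately have "iso C tau" using iso_me by blast
    then obtain tau' where tau': "tau' \<in> hom C P P" "cComp C tau' tau = cId C P"
      using iso_D tau by (fastforce simp: hom_def)
    define e1 where "e1 = tup pB pX (cId C B) (zero B X)"
    have e1: "e1 \<in> hom C B P" "cComp C pB e1 = cId C B" "cComp C pX e1 = zero B X"
      unfolding e1_def using tup[OF P, of "cId C B" B "zero B X"] zero_hom id_hom o Xo by auto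
    define g where "g = cComp C pX (cComp C tau' e1)"
    have gh: "g \<in> hom C B X" unfolding g_def using p tau' e1 comp_hom by blast
    have em: "cComp C e1 m = cComp C tau n"
    proof (rule prod_ext[OF P])
      show "cComp C e1 m \<in> hom C A P" "cComp C tau n \<in> hom C A P" using e1 mh tau n comp_hom by blast+
      show "cComp C pB (cComp C e1 m) = cComp C pB (cComp C tau n)" using e1 mh tau n p by (simp add: hom_def)
      have "cComp C rho n = zero A X" unfolding rho_def using r qh n qn o Xo Qo by (simp add: hom_def)
      then show "cComp C pX (cComp C e1 m) = cComp C pX (cComp C tau n)"
        using e1 mh tau n p o Xo by (simp add: hom_def)
    qed
    have "cComp C g m = cComp C pX (cComp C tau' (cComp C e1 m))"
      unfolding g_def using p tau' e1 mh by (simp add: hom_def)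
    also have "\<dots> = cComp C pX (cComp C tau' (cComp C tau n))" using em by simp
    also have "\<dots> = f" using p tau' tau(1) n by (simp add: hom_def)
    finally have "cComp C g m = f" .
    then show "\<exists>g \<in> hom C (cCod C m) X. cComp C g m = f" using gh unfolding B_def by blast
  qed
qed

lemma ab_strong_zero:
  assumes sc: "strong_complete_obj C X" shows "zero_obj C X"
proof -
  have Xo: "X \<in> cObj C" using sc unfolding strong_complete_obj_def by blast
  have scm: "\<And>m. protosplit_mono C m \<Longrightarrow> cDom C m = X \<Longrightarrow> \<exists>!r. is_retraction C r m"
    using sc unfolding strong_complete_obj_def by blast
  obtain P p1 p2 where P: "is_product C P p1 p2 X X" using prods Xo
    unfolding has_binary_products_def by blast
  have P': "is_product C P p2 p1 X X" using prod_sym[OF P] .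
  have p: "p1 \<in> hom C P X" "p2 \<in> hom C P X" using prodD[OF P] by auto
  have Po: "P \<in> cObj C" using p hom_objs by blast
  define i1 where "i1 = tup p2 p1 (zero X X) (cId C X)"
  have i1: "i1 \<in> hom C X P" "cComp C p2 i1 = zero X X" "cComp C p1 i1 = cId C X"
    unfolding i1_def using tup[OF P', of "zero X X" X "cId C X"] zero_hom id_hom Xo by auto
  have ki: "is_kernel C i1 p2" using prod_kernel[OF P'] unfolding i1_def .
  define i2 where "i2 = tup p1 p2 (zero X X) (cId C X)"
  have i2: "i2 \<in> hom C X P" "cComp C p2 i2 = cId C X"
    unfolding i2_def using tup[OF P, of "zero X X" X "cId C X"] zero_hom id_hom Xo by auto
  have se: "split_epi C p2" unfolding split_epi_def using i2 p by (auto simp: hom_def)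
  have "protosplit_mono C i1" unfolding protosplit_mono_def using se ki by blast
  then have uq: "\<exists>!r. is_retraction C r i1" using scm i1 by (simp add: hom_def)
  have "epi C p2" using section_epi[of p2 i2] i2 p by (simp add: hom_def)
  then have cp2: "is_cokernel C p2 i1" using normal_coker_kernel ki ne by blast
  define D where "D = tup p1 p2 (cId C X) (cId C X)"
  have D: "D \<in> hom C X P" "cComp C p1 D = cId C X" "cComp C p2 D = cId C X"
    unfolding D_def using tup[OF P, of "cId C X" X "cId C X"] id_hom[OF Xo] by auto
  have "mono C D" using retraction_mono[of D p1] D p by (simp add: hom_def)
  then have nD: "normal_mono C D" using nm by blast
  obtain q where q: "is_cokernel C q D" using cokerex D by (auto simp: hom_def)
  have kD: "is_kernel C D q" using normal_kernel_coker[OF nD q] .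
  note cq = cokernelD[OF q]
  define Q where "Q = cCod C q"
  have qh: "q \<in> hom C P Q" using cq D unfolding Q_def hom_def by simp
  have Qo: "Q \<in> cObj C" using qh hom_objs by blast
  have qD: "cComp C q D = zero X Q" using cq D unfolding Q_def by (simp add: hom_def)
  define j where "j = cComp C q i1"
  have jh: "j \<in> hom C X Q" unfolding j_def using qh i1 comp_hom by blast
  have "mono C j"
  proof (rule mono_t)
    show "j \<in> cArr C" using jh by (simp add: hom_def)
    fix z assume z: "z \<in> cArr C" "cCod C z = cDom C j" "cComp C j z = zero (cDom C z) (cCod C j)"
    define Z where "Z = cDom C z"
    have zh: "z \<in> hom C Z X" using z jh unfolding Z_def by (simp add: hom_def)
    have Zo: "Z \<in> cObj C" using zh hom_objs by blast
    have iz: "cComp C i1 z \<in> hom C Z P" using i1 zh comp_hom by blast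
    have "cComp C q (cComp C i1 z) = cComp C j z" unfolding j_def using qh i1 zh by (simp add: hom_def)
    also have "\<dots> = zero Z Q" using z jh unfolding Z_def by (simp add: hom_def)
    finally have "cComp C q (cComp C i1 z) = zero Z (cCod C q)" unfolding Q_def .
    then obtain a where a: "a \<in> hom C Z X" "cComp C D a = cComp C i1 z"
      using kernel_factor[OF kD, of "cComp C i1 z" Z] iz D qh by (auto simp: hom_def)
    have "z = cComp C p1 (cComp C i1 z)" using i1 zh p by (simp add: hom_def)
    also have "\<dots> = cComp C p1 (cComp C D a)" using a(2) by simp
    also have "\<dots> = a" using D a(1) p by (simp add: hom_def)
    finally have za: "z = a" .
    have "a = cComp C p2 (cComp C D a)" using D a(1) p by (simp add: hom_def)
    also have "\<dots> = cComp C p2 (cComp C i1 z)" using a(2) by simp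
    also have "\<dots> = zero Z X" using i1 zh p Xo by (simp add: hom_def)
    finally show "z = zero (cDom C z) (cDom C j)" using za jh unfolding Z_def by (simp add: hom_def)
  qed
  moreover have "epi C j"
  proof (rule epi_t)
    show "j \<in> cArr C" using jh by (simp add: hom_def)
    fix h assume h: "h \<in> cArr C" "cDom C h = cCod C j" "cComp C h j = zero (cDom C j) (cCod C h)"
    define Y where "Y = cCod C h"
    have hh: "h \<in> hom C Q Y" using h jh unfolding Y_def by (simp add: hom_def)
    have Yo: "Y \<in> cObj C" using hh hom_objs by blast
    have hq: "cComp C h q \<in> hom C P Y" using hh qh comp_hom by blast
    have "cComp C (cComp C h q) i1 = cComp C h j" unfolding j_def using hh qh i1 by (simp add: hom_def)
    also have "\<dots> = zero X Y" using h jh unfolding Y_def by (simp add: hom_def)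
    finally have "cComp C (cComp C h q) i1 = zero (cDom C i1) Y" using i1 by (simp add: hom_def)
    then obtain w where w: "w \<in> hom C X Y" "cComp C w p2 = cComp C h q"
      using cokernel_factor[OF cp2, of "cComp C h q" Y] hq i1 p by (auto simp: hom_def)
    have "w = cComp C (cComp C w p2) D" using w(1) D p by (simp add: hom_def)
    also have "\<dots> = cComp C (cComp C h q) D" using w(2) by simp
    also have "\<dots> = zero X Y" using hh qh D qD Qo Yo by (simp add: hom_def)
    finally have w0: "w = zero X Y" .
    have "cComp C h q = cComp C w p2" using w(2) by simp
    also have "\<dots> = zero P Y" using w0 p Yo by (simp add: hom_def)
    also have "\<dots> = cComp C (zero Q Y) q" using qh Yo Qo by (simp add: hom_def)
    finally have "cComp C h q = cComp C (zero Q Y) q" .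
    then have "h = zero Q Y"
      by (rule epiD[OF cokernel_epi[OF q], rotated 2]) (use hh Yo Qo in \<open>auto simp: Q_def zero_hom\<close>)
    then show "h = zero (cCod C j) (cCod C h)" using jh unfolding Y_def by (simp add: hom_def)
  qed
  ultimately have "iso C j" using iso_me by blast
  then obtain j' where j': "j' \<in> hom C Q X" "cComp C j' j = cId C X"
    using iso_D jh by (fastforce simp: hom_def)
  define rho where "rho = cComp C j' q"
  have rho: "rho \<in> hom C P X" unfolding rho_def using j' qh comp_hom by blast
  have "cComp C rho i1 = cComp C j' j" unfolding rho_def j_def using j' qh i1 by (simp add: hom_def)
  then have "is_retraction C rho i1" unfolding is_retraction_def using rho i1 j' by (simp add: hom_def)
  moreover have "is_retraction C p1 i1" unfolding is_retraction_def using p i1 by (simp add: hom_def)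
  ultimately have "rho = p1" using uq by (rule ex1_eq[rotated])
  have "cId C X = cComp C p1 D" using D by simp
  also have "\<dots> = cComp C rho D" using \<open>rho = p1\<close> by simp
  also have "\<dots> = zero X X" unfolding rho_def using j' qh D qD Qo Xo by (simp add: hom_def)
  finally show ?thesis using id_zero_obj Xo by blast
qed

end

locale sa = pc +
  assumes sa: "semi_abelian C"
begin

lemma sa_reg: "regular_cat C" using sa unfolding semi_abelian_def barr_exact_def by blast
lemma sa_prods: "has_binary_products C"
  using sa_reg unfolding regular_cat_def has_finite_limits_def by blast
lemma sa_eqs: "has_equalizers C"
  using sa_reg unfolding regular_cat_def has_finite_limits_def by blast
lemma sa_pbstable: "regular_epi C e \<Longrightarrow> is_pullback C p1 p2 g e \<Longrightarrow> regular_epi C p1"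
  using sa_reg unfolding regular_cat_def by blast
lemma sa_ssf0: "split_short_five C" using sa unfolding semi_abelian_def by blast

lemma ssf:
  assumes "p \<in> cArr C" "s \<in> hom C (cCod C p) (cDom C p)" "cComp C p s = cId C (cCod C p)"
    "is_kernel C k p"
    "p' \<in> cArr C" "s' \<in> hom C (cCod C p') (cDom C p')" "cComp C p' s' = cId C (cCod C p')"
    "is_kernel C k' p'"
    "u \<in> hom C (cDom C k) (cDom C k')" "v \<in> hom C (cDom C p) (cDom C p')"
    "w \<in> hom C (cCod C p) (cCod C p')"
    "cComp C k' u = cComp C v k" "cComp C p' v = cComp C w p" "cComp C v s = cComp C s' w"
    "iso C u" "iso C w"
  shows "iso C v"
proof -
  have H: "\<forall>p s k p' s' k' u v w.
        p \<in> cArr C \<and> s \<in> hom C (cCod C p) (cDom C p) \<and> cComp C p s = cId C (cCod C p) \<and>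
        is_kernel C k p \<and>
        p' \<in> cArr C \<and> s' \<in> hom C (cCod C p') (cDom C p') \<and> cComp C p' s' = cId C (cCod C p') \<and>
        is_kernel C k' p' \<and>
        u \<in> hom C (cDom C k) (cDom C k') \<and> v \<in> hom C (cDom C p) (cDom C p') \<and>
        w \<in> hom C (cCod C p) (cCod C p') \<and>
        cComp C k' u = cComp C v k \<and> cComp C p' v = cComp C w p \<and> cComp C v s = cComp C s' w \<and>
        iso C u \<and> iso C w \<longrightarrow> iso C v"
    using sa_ssf0 unfolding split_short_five_def .
  show ?thesis using assms by (intro H[rule_format, of p s k p' s' k' u v w] conjI)
qed

lemma eqD:
  assumes "is_equalizer C e f g"
  shows "e \<in> cArr C" "f \<in> cArr C" "g \<in> cArr C" "cDom C f = cDom C g" "cCod C f = cCod C g"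
      "cCod C e = cDom C f" "cComp C f e = cComp C g e"
proof -
  have "e \<in> cArr C \<and> f \<in> cArr C \<and> g \<in> cArr C \<and> cDom C f = cDom C g \<and> cCod C f = cCod C g \<and>
      cCod C e = cDom C f \<and> cComp C f e = cComp C g e"
    using assms unfolding is_equalizer_def by (elim conjE) (intro conjI)
  then show "e \<in> cArr C" "f \<in> cArr C" "g \<in> cArr C" "cDom C f = cDom C g" "cCod C f = cCod C g"
      "cCod C e = cDom C f" "cComp C f e = cComp C g e" by auto
qed

lemma eq_factor:
  assumes "is_equalizer C e f g" "h \<in> hom C T (cDom C f)" "cComp C f h = cComp C g h"
  shows "\<exists>u \<in> hom C T (cDom C e). cComp C e u = h"
proof -
  have all: "\<forall>h \<in> cArr C. cCod C h = cDom C f \<and> cComp C f h = cComp C g h \<longrightarrow>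
        (\<exists>!u. u \<in> hom C (cDom C h) (cDom C e) \<and> cComp C e u = h)"
    using assms(1) unfolding is_equalizer_def by (elim conjE)
  have h: "h \<in> cArr C" "cCod C h = cDom C f" "cDom C h = T" using assms(2) by (auto simp: hom_def)
  have "\<exists>!u. u \<in> hom C (cDom C h) (cDom C e) \<and> cComp C e u = h" using all h(1,2) assms(3) by blast
  then show ?thesis using h(3) by blast
qed

lemma eqex: assumes "f \<in> hom C X Y" "g \<in> hom C X Y" shows "\<exists>e. is_equalizer C e f g"
proof -
  have H: "\<And>f g. f \<in> cArr C \<Longrightarrow> g \<in> cArr C \<Longrightarrow> cDom C f = cDom C g \<Longrightarrow> cCod C f = cCod C g \<Longrightarrow>
     \<exists>e. is_equalizer C e f g" using sa_eqs unfolding has_equalizers_def by blast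
  show ?thesis by (rule H) (use assms in \<open>auto simp: hom_def\<close>)
qed

lemma kerex: assumes "f \<in> cArr C" shows "\<exists>k. is_kernel C k f"
proof -
  have o: "cDom C f \<in> cObj C" "cCod C f \<in> cObj C" using assms by auto
  obtain e where e: "is_equalizer C e f (zero (cDom C f) (cCod C f))"
    using eqex[of f "cDom C f" "cCod C f" "zero (cDom C f) (cCod C f)"] assms zero_hom[OF o]
    by (auto simp: hom_def)
  note ed = eqD[OF e]
  have "is_kernel C e f"
  proof (rule kernelI)
    show "e \<in> cArr C" "f \<in> cArr C" "cCod C e = cDom C f" using ed by auto
    show "cComp C f e = zero (cDom C e) (cCod C f)" using ed o by simp
    show "mono C e" using equalizer_mono[OF e] .
    fix g T assume g: "g \<in> hom C T (cDom C f)" "cComp C f g = zero T (cCod C f)"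
    have "cComp C f g = cComp C (zero (cDom C f) (cCod C f)) g" using g o by (simp add: hom_def)
    then show "\<exists>u \<in> hom C T (cDom C e). cComp C e u = g" using eq_factor[OF e g(1)] by blast
  qed
  then show ?thesis by blast
qed

lemma prodex: "A \<in> cObj C \<Longrightarrow> B \<in> cObj C \<Longrightarrow> \<exists>P p1 p2. is_product C P p1 p2 A B"
  using sa_prods unfolding has_binary_products_def by blast

lemma p1_iso:
  assumes s: "s \<in> hom C A B" and p: "p \<in> hom C B A" and sp: "cComp C s p = cId C B"
    and k: "is_kernel C k s" and m: "mono C m" "m \<in> hom C M A"
    and k': "k' \<in> hom C (cDom C k) M" "cComp C m k' = k"
    and p': "p' \<in> hom C B M" "cComp C m p' = p"
  shows "iso C m"
proof -
  note kk = kernelD[OF k]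
  define N where "N = cDom C k"
  have kh: "k \<in> hom C N A" using kk s unfolding N_def hom_def by simp
  have o: "A \<in> cObj C" "B \<in> cObj C" "N \<in> cObj C" "M \<in> cObj C" using kh s m(2) hom_objs by blast+
  have sk: "cComp C s k = zero N B" using kk s unfolding N_def by (simp add: hom_def)
  have k'h: "k' \<in> hom C N M" using k' unfolding N_def by simp
  have ker': "is_kernel C k' (cComp C s m)"
  proof (rule kernelI)
    show "k' \<in> cArr C" "cComp C s m \<in> cArr C" "cCod C k' = cDom C (cComp C s m)"
      using k'h s m(2) by (auto simp: hom_def)
    have "cComp C (cComp C s m) k' = cComp C s (cComp C m k')" using k'h s m(2) by (simp add: hom_def)
    also have "\<dots> = zero N B" using k'(2) sk by simp
    finally show "cComp C (cComp C s m) k' = zero (cDom C k') (cCod C (cComp C s m))"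
      using k'h s m(2) by (simp add: hom_def)
    show "mono C k'"
    proof (rule monoI)
      show "k' \<in> cArr C" using k'h by (simp add: hom_def)
      fix x y T assume x: "x \<in> hom C T (cDom C k')" and y: "y \<in> hom C T (cDom C k')"
        and e: "cComp C k' x = cComp C k' y"
      have "cComp C k x = cComp C m (cComp C k' x)" using k'(2) k'h m(2) x by (simp add: hom_def)
      also have "\<dots> = cComp C m (cComp C k' y)" using e by simp
      also have "\<dots> = cComp C k y" using k'(2) k'h m(2) y by (simp add: hom_def)
      finally show "x = y" by (rule monoD[OF kernel_mono[OF k], rotated 2]) (use x y k'h in \<open>auto simp: hom_def N_def\<close>)
    qed
    fix g T assume g: "g \<in> hom C T (cDom C (cComp C s m))"
      "cComp C (cComp C s m) g = zero T (cCod C (cComp C s m))"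
    have gh: "g \<in> hom C T M" using g s m(2) by (simp add: hom_def)
    have To: "T \<in> cObj C" using gh hom_objs by blast
    have mg: "cComp C m g \<in> hom C T A" using gh m(2) comp_hom by blast
    have "cComp C s (cComp C m g) = zero T B" using g s m(2) by (simp add: hom_def)
    then obtain w where w: "w \<in> hom C T N" "cComp C k w = cComp C m g"
      using kernel_factor[OF k, of "cComp C m g" T] mg s unfolding N_def by (auto simp: hom_def)
    have "cComp C m (cComp C k' w) = cComp C k w" using k'(2) k'h m(2) w(1) by (simp add: hom_def)
    also have "\<dots> = cComp C m g" using w(2) .
    finally have "cComp C k' w = g"
      by (rule monoD[OF m(1), rotated 2]) (use k'h w gh m(2) in \<open>auto simp: hom_def\<close>)
    then show "\<exists>u \<in> hom C T (cDom C k'). cComp C k' u = g" using w k'h by (auto simp: hom_def)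
  qed
  show ?thesis
  proof (rule ssf[of "cComp C s m" p' k' s p k "cId C N" m "cId C B"])
    show "cComp C s m \<in> cArr C" using s m(2) by (auto simp: hom_def)
    show "p' \<in> hom C (cCod C (cComp C s m)) (cDom C (cComp C s m))" using p' s m(2) by (simp add: hom_def)
    have "cComp C (cComp C s m) p' = cComp C s (cComp C m p')" using p'(1) s m(2) by (simp add: hom_def)
    then show "cComp C (cComp C s m) p' = cId C (cCod C (cComp C s m))"
      using p'(2) sp s m(2) by (simp add: hom_def)
    show "is_kernel C k' (cComp C s m)" using ker' .
    show "s \<in> cArr C" "p \<in> hom C (cCod C s) (cDom C s)" "cComp C s p = cId C (cCod C s)" "is_kernel C k s"
      using s p sp k by (auto simp: hom_def)
    show "cId C N \<in> hom C (cDom C k') (cDom C k)" using k'h id_hom o unfolding N_def by (simp add: hom_def)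
    show "m \<in> hom C (cDom C (cComp C s m)) (cDom C s)" using m(2) s by (simp add: hom_def)
    show "cId C B \<in> hom C (cCod C (cComp C s m)) (cCod C s)" using m(2) s id_hom o by (simp add: hom_def)
    show "cComp C k (cId C N) = cComp C m k'" using k'(2) kh by (simp add: hom_def)
    show "cComp C s m = cComp C (cId C B) (cComp C s m)" using s m(2) by (simp add: hom_def)
    show "cComp C m p' = cComp C p (cId C B)" using p' p by (simp add: hom_def)
    show "iso C (cId C N)" "iso C (cId C B)" using id_iso o by auto
  qed
qed

lemma je:
  assumes s: "s \<in> hom C A B" and p: "p \<in> hom C B A" and sp: "cComp C s p = cId C B"
    and k: "is_kernel C k s"
    and g: "g1 \<in> hom C A Y" "g2 \<in> hom C A Y"
    and ek: "cComp C g1 k = cComp C g2 k" and ep: "cComp C g1 p = cComp C g2 p"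
  shows "g1 = g2"
proof -
  note kk = kernelD[OF k]
  obtain e where e: "is_equalizer C e g1 g2" using eqex g by blast
  note ed = eqD[OF e]
  have eh: "e \<in> hom C (cDom C e) A" using ed g by (simp add: hom_def)
  obtain k' where k': "k' \<in> hom C (cDom C k) (cDom C e)" "cComp C e k' = k"
    using eq_factor[OF e, of k "cDom C k"] ek kk s g by (auto simp: hom_def)
  obtain p' where p': "p' \<in> hom C B (cDom C e)" "cComp C e p' = p"
    using eq_factor[OF e, of p B] ep p g by (auto simp: hom_def)
  have "iso C e" using p1_iso[OF s p sp k equalizer_mono[OF e] eh k' p'] .
  then have "epi C e" using iso_epi by blast
  from epiD[OF this, of g1 Y g2] show ?thesis using g ed eh by (auto simp: hom_def)
qed

lemma pbex:
  assumes f: "f \<in> hom C X Z" and g: "g \<in> hom C Y Z"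
  shows "\<exists>p1 p2. is_pullback C p1 p2 f g"
proof -
  have o: "X \<in> cObj C" "Y \<in> cObj C" "Z \<in> cObj C" using f g hom_objs by blast+
  obtain P q1 q2 where P: "is_product C P q1 q2 X Y" using prodex o by blast
  have q: "q1 \<in> hom C P X" "q2 \<in> hom C P Y" using prodD[OF P] by auto
  have "cComp C f q1 \<in> hom C P Z" "cComp C g q2 \<in> hom C P Z" using q f g comp_hom by blast+
  then obtain e where e: "is_equalizer C e (cComp C f q1) (cComp C g q2)" using eqex by blast
  note ed = eqD[OF e]
  define E where "E = cDom C e"
  have eh: "e \<in> hom C E P" using ed q f g unfolding E_def by (simp add: hom_def)
  have eq: "cComp C f (cComp C q1 e) = cComp C g (cComp C q2 e)" using ed eh f g q by (simp add: hom_def)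
  have "is_pullback C (cComp C q1 e) (cComp C q2 e) f g"
    unfolding is_pullback_def
  proof (intro conjI ballI impI)
    show "cComp C q1 e \<in> cArr C" "cComp C q2 e \<in> cArr C" "f \<in> cArr C" "g \<in> cArr C"
      "cDom C (cComp C q1 e) = cDom C (cComp C q2 e)" "cCod C (cComp C q1 e) = cDom C f"
      "cCod C (cComp C q2 e) = cDom C g" "cCod C f = cCod C g"
      using eh q f g by (auto simp: hom_def)
    show "cComp C f (cComp C q1 e) = cComp C g (cComp C q2 e)" using eq .
    fix T a b assume T: "T \<in> cObj C" and a: "a \<in> hom C T (cDom C f)" and b: "b \<in> hom C T (cDom C g)"
      and ab: "cComp C f a = cComp C g b"
    have a': "a \<in> hom C T X" and b': "b \<in> hom C T Y" using a b f g by (auto simp: hom_def)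
    define t where "t = tup q1 q2 a b"
    have t: "t \<in> hom C T P" "cComp C q1 t = a" "cComp C q2 t = b" unfolding t_def using tup[OF P a' b'] by auto
    have "cComp C (cComp C f q1) t = cComp C (cComp C g q2) t"
    proof -
      have "cComp C (cComp C f q1) t = cComp C f (cComp C q1 t)" using t(1) f q by (simp add: hom_def)
      also have "\<dots> = cComp C g (cComp C q2 t)" using t(2,3) ab by simp
      also have "\<dots> = cComp C (cComp C g q2) t" using t(1) g q by (simp add: hom_def)
      finally show ?thesis .
    qed
    then obtain u where u: "u \<in> hom C T E" "cComp C e u = t"
      using eq_factor[OF e, of t T] t q f unfolding E_def by (auto simp: hom_def)
    show "\<exists>!u. u \<in> hom C T (cDom C (cComp C q1 e)) \<and> cComp C (cComp C q1 e) u = a \<and> cComp C (cComp C q2 e) u = b"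
    proof (rule ex1I[of _ u])
      have "cComp C (cComp C q1 e) u = cComp C q1 (cComp C e u)" using u(1) eh q by (simp add: hom_def)
      moreover have "cComp C (cComp C q2 e) u = cComp C q2 (cComp C e u)" using u(1) eh q by (simp add: hom_def)
      ultimately show "u \<in> hom C T (cDom C (cComp C q1 e)) \<and> cComp C (cComp C q1 e) u = a \<and> cComp C (cComp C q2 e) u = b"
        using u t eh q by (simp add: hom_def E_def)
      fix v assume v: "v \<in> hom C T (cDom C (cComp C q1 e)) \<and> cComp C (cComp C q1 e) v = a \<and> cComp C (cComp C q2 e) v = b"
      have vh: "v \<in> hom C T E" using v eh q by (simp add: hom_def)
      have "cComp C e v = t"
      proof (rule prod_ext[OF P])
        show "cComp C e v \<in> hom C T P" "t \<in> hom C T P" using vh eh t comp_hom by blast+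
        show "cComp C q1 (cComp C e v) = cComp C q1 t" using v vh eh q t by (simp add: hom_def)
        show "cComp C q2 (cComp C e v) = cComp C q2 t" using v vh eh q t by (simp add: hom_def)
      qed
      then show "v = u" using u
        by (intro monoD[OF equalizer_mono[OF e], of v T u]) (use vh in \<open>auto simp: E_def\<close>)
    qed
  qed
  then show ?thesis by blast
qed

lemma pbD:
  assumes "is_pullback C p1 p2 f g"
  shows "p1 \<in> cArr C" "p2 \<in> cArr C" "f \<in> cArr C" "g \<in> cArr C"
     "cDom C p1 = cDom C p2" "cCod C p1 = cDom C f" "cCod C p2 = cDom C g"
     "cCod C f = cCod C g" "cComp C f p1 = cComp C g p2"
proof -
  have "p1 \<in> cArr C \<and> p2 \<in> cArr C \<and> f \<in> cArr C \<and> g \<in> cArr C \<and>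
     cDom C p1 = cDom C p2 \<and> cCod C p1 = cDom C f \<and> cCod C p2 = cDom C g \<and>
     cCod C f = cCod C g \<and> cComp C f p1 = cComp C g p2"
    using assms unfolding is_pullback_def by (elim conjE) (intro conjI)
  then show "p1 \<in> cArr C" "p2 \<in> cArr C" "f \<in> cArr C" "g \<in> cArr C"
     "cDom C p1 = cDom C p2" "cCod C p1 = cDom C f" "cCod C p2 = cDom C g"
     "cCod C f = cCod C g" "cComp C f p1 = cComp C g p2" by auto
qed

lemma pb_univ:
  assumes "is_pullback C p1 p2 f g" "a \<in> hom C T (cDom C f)" "b \<in> hom C T (cDom C g)"
    "cComp C f a = cComp C g b"
  shows "\<exists>!u. u \<in> hom C T (cDom C p1) \<and> cComp C p1 u = a \<and> cComp C p2 u = b"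
proof -
  have all: "\<forall>T \<in> cObj C. \<forall>a \<in> hom C T (cDom C f). \<forall>b \<in> hom C T (cDom C g).
        cComp C f a = cComp C g b \<longrightarrow>
        (\<exists>!u. u \<in> hom C T (cDom C p1) \<and> cComp C p1 u = a \<and> cComp C p2 u = b)"
    using assms(1) unfolding is_pullback_def by (elim conjE)
  have "T \<in> cObj C" using assms(2) hom_objs by blast
  then show ?thesis using all assms(2-4) by blast
qed

lemma pb_ext:
  assumes "is_pullback C p1 p2 f g" "u \<in> hom C T (cDom C p1)" "v \<in> hom C T (cDom C p1)"
    "cComp C p1 u = cComp C p1 v" "cComp C p2 u = cComp C p2 v"
  shows "u = v"
proof -
  note d = pbD[OF assms(1)]
  have a: "cComp C p1 u \<in> hom C T (cDom C f)" "cComp C p2 u \<in> hom C T (cDom C g)"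
    using assms(2) d by (auto simp: hom_def)
  have "cComp C f (cComp C p1 u) = cComp C g (cComp C p2 u)"
    using assms(2) d by (simp add: hom_def)
  from pb_univ[OF assms(1) a this] show ?thesis by (rule ex1_eq) (use assms in auto)
qed

end

lemma regular_mono_op[simp]: "regular_mono (op_cat C) = regular_epi C"
  by (intro ext) (simp add: regular_mono_def regular_epi_def)

context pc begin

lemma ker_z0:
  assumes r: "r \<in> cArr C"
    and H: "\<And>g T. g \<in> hom C T (cDom C r) \<Longrightarrow> cComp C r g = zero T (cCod C r) \<Longrightarrow> g = zero T (cDom C r)"
  shows "is_kernel C (zero z0 (cDom C r)) r"
proof -
  have zo: "z0 \<in> cObj C" using zero_obj_obj[OF z0] .
  have o: "cDom C r \<in> cObj C" "cCod C r \<in> cObj C" using r by auto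
  show ?thesis
  proof (rule kernelI)
    show "zero z0 (cDom C r) \<in> cArr C" "r \<in> cArr C" "cCod C (zero z0 (cDom C r)) = cDom C r"
      using zo o r by auto
    show "cComp C r (zero z0 (cDom C r)) = zero (cDom C (zero z0 (cDom C r))) (cCod C r)"
      using zo o r by simp
    show "mono C (zero z0 (cDom C r))"
    proof (rule monoI)
      show "zero z0 (cDom C r) \<in> cArr C" using zo o by simp
      fix g h T assume "g \<in> hom C T (cDom C (zero z0 (cDom C r)))" "h \<in> hom C T (cDom C (zero z0 (cDom C r)))"
      then have "g \<in> hom C T z0" "h \<in> hom C T z0" using zo o by auto
      then show "g = h" using ter_unique by blast
    qed
    fix g T assume g: "g \<in> hom C T (cDom C r)" "cComp C r g = zero T (cCod C r)"
    have To: "T \<in> cObj C" using g hom_objs by blast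
    have "cComp C (zero z0 (cDom C r)) (ter T) = zero T (cDom C r)"
      using ter[OF To] zo o by (simp add: hom_def)
    then show "\<exists>u \<in> hom C T (cDom C (zero z0 (cDom C r))). cComp C (zero z0 (cDom C r)) u = g"
      using H[OF g] ter[OF To] zo o by auto
  qed
qed

end

context sa begin

lemma kpair:
  assumes f: "f \<in> hom C X Y"
  shows "\<exists>r1 r2 d. is_pullback C r1 r2 f f \<and> d \<in> hom C X (cDom C r1) \<and>
            cComp C r1 d = cId C X \<and> cComp C r2 d = cId C X"
proof -
  obtain r1 r2 where pb: "is_pullback C r1 r2 f f" using pbex[OF f f] by blast
  have Xo: "X \<in> cObj C" using f hom_objs by blast
  have "cId C X \<in> hom C X (cDom C f)" using id_hom Xo f by (simp add: hom_def)
  from pb_univ[OF pb this this] obtain d where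
    "d \<in> hom C X (cDom C r1) \<and> cComp C r1 d = cId C X \<and> cComp C r2 d = cId C X" by blast
  then show ?thesis using pb by blast
qed

lemma sa_mono:
  assumes f: "f \<in> hom C X Y"
    and H: "\<And>z T. z \<in> hom C T X \<Longrightarrow> cComp C f z = zero T Y \<Longrightarrow> z = zero T X"
  shows "mono C f"
proof -
  obtain r1 r2 d where pb: "is_pullback C r1 r2 f f" and d: "d \<in> hom C X (cDom C r1)"
    "cComp C r1 d = cId C X" "cComp C r2 d = cId C X" using kpair[OF f] by blast
  note pd = pbD[OF pb]
  define R where "R = cDom C r1"
  have r: "r1 \<in> hom C R X" "r2 \<in> hom C R X" using pd f unfolding R_def by (auto simp: hom_def)
  have dh: "d \<in> hom C X R" using d unfolding R_def by simp
  have o: "X \<in> cObj C" "Y \<in> cObj C" "R \<in> cObj C" using f r hom_objs by blast+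
  have zo: "z0 \<in> cObj C" using zero_obj_obj[OF z0] .
  have fr: "cComp C f r1 = cComp C f r2" using pd by simp
  have kr: "is_kernel C (zero z0 R) r1"
  proof -
    have "is_kernel C (zero z0 (cDom C r1)) r1"
    proof (rule ker_z0)
      show "r1 \<in> cArr C" using r by (simp add: hom_def)
      fix g T assume g: "g \<in> hom C T (cDom C r1)" "cComp C r1 g = zero T (cCod C r1)"
      have gh: "g \<in> hom C T R" using g(1) unfolding R_def .
      have To: "T \<in> cObj C" using gh hom_objs by blast
      have g1: "cComp C r1 g = zero T X" using g r by (simp add: hom_def)
      have "cComp C f (cComp C r2 g) = cComp C (cComp C f r2) g" using f r gh by (simp add: hom_def)
      also have "\<dots> = cComp C (cComp C f r1) g" using fr by simp
      also have "\<dots> = cComp C f (cComp C r1 g)" using f r gh by (simp add: hom_def)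
      also have "\<dots> = zero T Y" using g1 f To by (simp add: hom_def)
      finally have g2: "cComp C r2 g = zero T X" using H[of "cComp C r2 g" T] r gh comp_hom by blast
      have "g = zero T R"
        by (rule pb_ext[OF pb]) (use gh g1 g2 r To o zero_hom in \<open>auto simp: hom_def R_def\<close>)
      then show "g = zero T (cDom C r1)" unfolding R_def .
    qed
    then show ?thesis unfolding R_def .
  qed
  have kx: "is_kernel C (zero z0 X) (cId C X)"
  proof -
    have "is_kernel C (zero z0 (cDom C (cId C X))) (cId C X)"
    proof (rule ker_z0)
      show "cId C X \<in> cArr C" using o by simp
      fix g T assume g: "g \<in> hom C T (cDom C (cId C X))" "cComp C (cId C X) g = zero T (cCod C (cId C X))"
      then show "g = zero T (cDom C (cId C X))" using o by (simp add: hom_def)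
    qed
    then show ?thesis using o by simp
  qed
  have "iso C d"
  proof (rule ssf[of "cId C X" "cId C X" "zero z0 X" r1 d "zero z0 R" "cId C z0" d "cId C X"])
    show "cId C X \<in> cArr C" "cId C X \<in> hom C (cCod C (cId C X)) (cDom C (cId C X))"
      "cComp C (cId C X) (cId C X) = cId C (cCod C (cId C X))" using o id_hom by auto
    show "is_kernel C (zero z0 X) (cId C X)" using kx .
    show "r1 \<in> cArr C" "d \<in> hom C (cCod C r1) (cDom C r1)" "cComp C r1 d = cId C (cCod C r1)"
      using r dh d unfolding R_def by (auto simp: hom_def)
    show "is_kernel C (zero z0 R) r1" using kr .
    show "cId C z0 \<in> hom C (cDom C (zero z0 X)) (cDom C (zero z0 R))" using zo o id_hom by simp
    show "d \<in> hom C (cDom C (cId C X)) (cDom C r1)" using dh o r by (simp add: hom_def)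
    show "cId C X \<in> hom C (cCod C (cId C X)) (cCod C r1)" using o r id_hom by (simp add: hom_def)
    show "cComp C (zero z0 R) (cId C z0) = cComp C d (zero z0 X)" using zo o dh by (simp add: hom_def)
    show "cComp C r1 d = cComp C (cId C X) (cId C X)" using d o by simp
    show "cComp C d (cId C X) = cComp C d (cId C X)" ..
    show "iso C (cId C z0)" "iso C (cId C X)" using id_iso zo o by auto
  qed
  then have "epi C d" using iso_epi by blast
  then have r12: "r1 = r2" using epiD[of d r1 X r2] r dh d by (simp add: hom_def)
  show ?thesis
  proof (rule monoI)
    show "f \<in> cArr C" using f by (simp add: hom_def)
    fix x y T assume x: "x \<in> hom C T (cDom C f)" and y: "y \<in> hom C T (cDom C f)"
      and e: "cComp C f x = cComp C f y"
    obtain u where "u \<in> hom C T (cDom C r1) \<and> cComp C r1 u = x \<and> cComp C r2 u = y"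
      using pb_univ[OF pb x y e] by blast
    then show "x = y" using r12 by blast
  qed
qed

lemma coeqD:
  assumes "is_coequalizer C e x y"
  shows "e \<in> cArr C" "x \<in> cArr C" "y \<in> cArr C" "cCod C x = cCod C y" "cDom C x = cDom C y"
    "cDom C e = cCod C x" "cComp C e x = cComp C e y"
    "\<And>h. h \<in> cArr C \<Longrightarrow> cDom C h = cCod C x \<Longrightarrow> cComp C h x = cComp C h y \<Longrightarrow>
        \<exists>!u. u \<in> hom C (cCod C e) (cCod C h) \<and> cComp C u e = h"
proof -
  have "e \<in> cArr C \<and> x \<in> cArr C \<and> y \<in> cArr C \<and> cCod C x = cCod C y \<and> cDom C x = cDom C y \<and>
    cDom C e = cCod C x \<and> cComp C e x = cComp C e y"
    using assms unfolding is_coequalizer_def is_equalizer_def op_simps by (elim conjE) (intro conjI)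
  then show "e \<in> cArr C" "x \<in> cArr C" "y \<in> cArr C" "cCod C x = cCod C y" "cDom C x = cDom C y"
    "cDom C e = cCod C x" "cComp C e x = cComp C e y" by auto
  have all: "\<forall>h \<in> cArr C. cDom C h = cCod C x \<and> cComp C h x = cComp C h y \<longrightarrow>
        (\<exists>!u. u \<in> hom C (cCod C e) (cCod C h) \<and> cComp C u e = h)"
    using assms unfolding is_coequalizer_def is_equalizer_def op_simps hom_op by (elim conjE)
  fix h assume "h \<in> cArr C" "cDom C h = cCod C x" "cComp C h x = cComp C h y"
  then show "\<exists>!u. u \<in> hom C (cCod C e) (cCod C h) \<and> cComp C u e = h" using all by blast
qed

end

context sa begin

lemma sa_normal:
  assumes re: "regular_epi C e" shows "normal_epi C e"
proof -
  have "\<exists>x y. is_coequalizer C e x y" using re unfolding regular_epi_def .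
  then obtain x y where co: "is_coequalizer C e x y" by (elim exE)
  note cd = coeqD[OF co]
  define A where "A = cDom C e"
  define E where "E = cCod C e"
  have eh: "e \<in> hom C A E" using cd(1-7) unfolding A_def E_def hom_def by simp
  have o: "A \<in> cObj C" "E \<in> cObj C" using eh hom_objs by blast+
  obtain k where k: "is_kernel C k e" using kerex cd(1) by blast
  note kk = kernelD[OF k]
  define K where "K = cDom C k"
  have kh: "k \<in> hom C K A" using kk eh unfolding K_def hom_def by simp
  have Ko: "K \<in> cObj C" using kh hom_objs by blast
  have ek: "cComp C e k = zero K E" using kk eh unfolding K_def by (simp add: hom_def)
  obtain r1 r2 d where pb: "is_pullback C r1 r2 e e" and d: "d \<in> hom C A (cDom C r1)"
    "cComp C r1 d = cId C A" "cComp C r2 d = cId C A" using kpair[OF eh] by blast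
  note pd = pbD[OF pb]
  define R where "R = cDom C r1"
  have r: "r1 \<in> hom C R A" "r2 \<in> hom C R A" using pd eh unfolding R_def by (auto simp: hom_def)
  have dh: "d \<in> hom C A R" using d unfolding R_def by simp
  have er: "cComp C e r1 = cComp C e r2" using pd by simp
  have "\<exists>!u. u \<in> hom C K (cDom C r1) \<and> cComp C r1 u = zero K A \<and> cComp C r2 u = k"
    by (rule pb_univ[OF pb]) (use kh Ko o eh ek zero_hom in \<open>auto simp: hom_def\<close>)
  then obtain j where j: "j \<in> hom C K R" "cComp C r1 j = zero K A" "cComp C r2 j = k"
    unfolding R_def by blast
  have kj: "is_kernel C j r1"
  proof (rule kernelI)
    show "j \<in> cArr C" "r1 \<in> cArr C" "cCod C j = cDom C r1" using j r unfolding R_def by (auto simp: hom_def)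
    show "cComp C r1 j = zero (cDom C j) (cCod C r1)" using j r by (simp add: hom_def)
    show "mono C j"
    proof (rule monoI)
      show "j \<in> cArr C" using j by (simp add: hom_def)
      fix a b T assume a: "a \<in> hom C T (cDom C j)" and b: "b \<in> hom C T (cDom C j)"
        and ab: "cComp C j a = cComp C j b"
      have "cComp C k a = cComp C r2 (cComp C j a)" using j r a by (simp add: hom_def)
      also have "\<dots> = cComp C r2 (cComp C j b)" using ab by simp
      also have "\<dots> = cComp C k b" using j r b by (simp add: hom_def)
      finally show "a = b"
        by (rule monoD[OF kernel_mono[OF k], rotated 2]) (use a b j in \<open>auto simp: hom_def K_def\<close>)
    qed
    fix z T assume z: "z \<in> hom C T (cDom C r1)" "cComp C r1 z = zero T (cCod C r1)"
    have zh: "z \<in> hom C T R" using z(1) unfolding R_def .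
    have To: "T \<in> cObj C" using zh hom_objs by blast
    have z1: "cComp C r1 z = zero T A" using z r by (simp add: hom_def)
    have "cComp C e (cComp C r2 z) = cComp C (cComp C e r2) z" using eh r zh by (simp add: hom_def)
    also have "\<dots> = cComp C (cComp C e r1) z" using er by simp
    also have "\<dots> = cComp C e (cComp C r1 z)" using eh r zh by (simp add: hom_def)
    also have "\<dots> = zero T E" using z1 eh To by (simp add: hom_def)
    finally have "cComp C e (cComp C r2 z) = zero T (cCod C e)" unfolding E_def .
    then obtain w where w: "w \<in> hom C T K" "cComp C k w = cComp C r2 z"
      using kernel_factor[OF k, of "cComp C r2 z" T] r zh eh unfolding K_def by (auto simp: hom_def)
    have "cComp C j w = z"
    proof (rule pb_ext[OF pb])
      show "cComp C j w \<in> hom C T (cDom C r1)" "z \<in> hom C T (cDom C r1)" using j w zh comp_hom unfolding R_def by blast+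
      show "cComp C r1 (cComp C j w) = cComp C r1 z" using j w(1) r z1 o by (simp add: hom_def)
      have "cComp C r2 (cComp C j w) = cComp C (cComp C r2 j) w" using j w(1) r by (simp add: hom_def)
      also have "\<dots> = cComp C r2 z" using j(3) w(2) by simp
      finally show "cComp C r2 (cComp C j w) = cComp C r2 z" .
    qed
    then show "\<exists>u \<in> hom C T (cDom C j). cComp C j u = z" using w j by (auto simp: hom_def)
  qed
  have "epi C e"
  proof (rule epiI)
    show "e \<in> cArr C" using eh by (simp add: hom_def)
    fix g h T assume g: "g \<in> hom C (cCod C e) T" and h: "h \<in> hom C (cCod C e) T"
      and gh: "cComp C g e = cComp C h e"
    let ?f = "cComp C g e"
    have "?f \<in> cArr C" "cDom C ?f = cCod C x" using g cd(1-7) by (auto simp: hom_def)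
    moreover have "cComp C ?f x = cComp C ?f y"
    proof -
      have "cComp C ?f x = cComp C g (cComp C e x)" using g cd(1-6) by (simp add: hom_def)
      also have "\<dots> = cComp C g (cComp C e y)" using cd(7) by simp
      also have "\<dots> = cComp C ?f y" using g cd(1-6) by (simp add: hom_def)
      finally show ?thesis .
    qed
    ultimately have "\<exists>!u. u \<in> hom C (cCod C e) (cCod C ?f) \<and> cComp C u e = ?f" using cd(8) by blast
    then show "g = h" by (rule ex1_eq) (use g h gh cd(1-7) in \<open>auto simp: hom_def\<close>)
  qed
  have "is_cokernel C e k"
  proof (rule cokernelI)
    show "e \<in> cArr C" "k \<in> cArr C" "cDom C e = cCod C k" using eh kh by (auto simp: hom_def)
    show "cComp C e k = zero (cDom C k) (cCod C e)" using ek unfolding K_def E_def .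
    show "epi C e" using \<open>epi C e\<close> .
    fix g T assume g: "g \<in> hom C (cCod C k) T" "cComp C g k = zero (cDom C k) T"
    have gh: "g \<in> hom C A T" using g kh by (simp add: hom_def)
    have To: "T \<in> cObj C" using gh hom_objs by blast
    have gk: "cComp C g k = zero K T" using g unfolding K_def by simp
    have g12: "cComp C g r1 = cComp C g r2"
    proof (rule je[of r1 R A d j])
      show "r1 \<in> hom C R A" "d \<in> hom C A R" "cComp C r1 d = cId C A" "is_kernel C j r1"
        using r dh d kj by auto
      show "cComp C g r1 \<in> hom C R T" "cComp C g r2 \<in> hom C R T" using gh r comp_hom by blast+
      show "cComp C (cComp C g r1) j = cComp C (cComp C g r2) j"
      proof -
        have "cComp C (cComp C g r1) j = cComp C g (cComp C r1 j)" using gh r j Ko by (simp add: hom_def)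
        also have "\<dots> = zero K T" using j(2) gh Ko by (simp add: hom_def)
        also have "\<dots> = cComp C g (cComp C r2 j)" using j(3) gk by simp
        also have "\<dots> = cComp C (cComp C g r2) j" using gh r j(1) by (simp add: hom_def)
        finally show ?thesis .
      qed
      show "cComp C (cComp C g r1) d = cComp C (cComp C g r2) d" using gh r dh d by (simp add: hom_def)
    qed
    have xh: "x \<in> hom C (cDom C x) (cDom C e)" "y \<in> hom C (cDom C x) (cDom C e)" using cd(1-7) by (auto simp: hom_def)
    obtain w where w: "w \<in> hom C (cDom C x) (cDom C r1)" "cComp C r1 w = x" "cComp C r2 w = y"
      using pb_univ[OF pb xh cd(7)] by blast
    have gxy: "cComp C g x = cComp C g y"
    proof -
      have "cComp C g x = cComp C (cComp C g r1) w" using w(1,2) gh r unfolding R_def by (auto simp: hom_def)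
      also have "\<dots> = cComp C (cComp C g r2) w" using g12 by simp
      also have "\<dots> = cComp C g y" using w(1,3) gh r unfolding R_def by (auto simp: hom_def)
      finally show ?thesis .
    qed
    have "\<exists>!u. u \<in> hom C (cCod C e) (cCod C g) \<and> cComp C u e = g"
      by (rule cd(8)) (use gh gxy cd(1-7) in \<open>auto simp: hom_def A_def\<close>)
    then have "\<exists>u. u \<in> hom C (cCod C e) (cCod C g) \<and> cComp C u e = g" by (rule ex1_implies_ex)
    then obtain u where "u \<in> hom C (cCod C e) (cCod C g)" "cComp C u e = g" by (elim exE conjE)
    moreover have "cCod C g = T" using g(1) by (simp add: hom_def)
    ultimately show "\<exists>u \<in> hom C (cCod C e) T. cComp C u e = g" by blast
  qed
  then show ?thesis unfolding normal_epi_def by blast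
qed

end

context sa begin

lemma sa_s1:
  assumes kc: "is_cokernel C \<kappa> p" and ph: "p \<in> hom C B A" and s: "s \<in> hom C A B"
    and sp: "cComp C s p = cId C B" and np: "normal_mono C p"
  shows "\<exists>\<sigma> \<in> hom C (cCod C \<kappa>) A. cComp C \<kappa> \<sigma> = cId C (cCod C \<kappa>)"
proof -
  note ck = cokernelD[OF kc]
  define K where "K = cCod C \<kappa>"
  have kah: "\<kappa> \<in> hom C A K" using ck ph unfolding K_def hom_def by simp
  have o: "A \<in> cObj C" "B \<in> cObj C" "K \<in> cObj C" using kah ph hom_objs by blast+
  have kp: "cComp C \<kappa> p = zero B K" using ck ph unfolding K_def by (simp add: hom_def)
  have pk: "is_kernel C p \<kappa>" using normal_kernel_coker[OF np kc] .
  obtain k where k: "is_kernel C k s" using kerex s by (auto simp: hom_def)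
  note kk = kernelD[OF k]
  define N where "N = cDom C k"
  have kh: "k \<in> hom C N A" using kk s unfolding N_def hom_def by simp
  have No: "N \<in> cObj C" using kh hom_objs by blast
  have sk: "cComp C s k = zero N B" using kk s unfolding N_def by (simp add: hom_def)
  define t where "t = cComp C \<kappa> k"
  have th: "t \<in> hom C N K" unfolding t_def using kah kh comp_hom by blast
  have tm: "mono C t"
  proof (rule sa_mono[OF th])
    fix z T assume z: "z \<in> hom C T N" "cComp C t z = zero T K"
    have To: "T \<in> cObj C" using z hom_objs by blast
    have kz: "cComp C k z \<in> hom C T A" using kh z comp_hom by blast
    have "cComp C \<kappa> (cComp C k z) = cComp C t z" unfolding t_def using kah kh z(1) by (simp add: hom_def)
    then have "cComp C \<kappa> (cComp C k z) = zero T (cCod C \<kappa>)" using z(2) unfolding K_def by simp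
    then obtain w where w: "w \<in> hom C T B" "cComp C p w = cComp C k z"
      using kernel_factor[OF pk, of "cComp C k z" T] kz kah ph by (auto simp: hom_def)
    have "w = cComp C s (cComp C p w)" using w(1) s ph sp by (simp add: hom_def)
    also have "\<dots> = cComp C s (cComp C k z)" using w(2) by simp
    also have "\<dots> = zero T B" using s kh z(1) sk o To by (simp add: hom_def)
    finally have w0: "w = zero T B" .
    have "cComp C k z = cComp C p w" using w(2) by simp
    also have "\<dots> = zero T A" using w0 ph To by (simp add: hom_def)
    also have "\<dots> = cComp C k (zero T N)" using kh To No by (simp add: hom_def)
    finally show "z = zero T N"
      by (rule monoD[OF kernel_mono[OF k], rotated 2]) (use z To No zero_hom in \<open>auto simp: N_def\<close>)
  qed
  obtain m m2 where pb: "is_pullback C m m2 \<kappa> t" using pbex[OF kah th] by blast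
  note pd = pbD[OF pb]
  define E where "E = cDom C m"
  have mh: "m \<in> hom C E A" "m2 \<in> hom C E N" using pd kah th unfolding E_def by (auto simp: hom_def)
  have km: "cComp C \<kappa> m = cComp C t m2" using pd by simp
  have mm: "mono C m"
  proof (rule monoI)
    show "m \<in> cArr C" using mh by (simp add: hom_def)
    fix x y T assume x: "x \<in> hom C T (cDom C m)" and y: "y \<in> hom C T (cDom C m)"
      and e: "cComp C m x = cComp C m y"
    have "cComp C t (cComp C m2 x) = cComp C (cComp C t m2) x" using th mh x by (simp add: hom_def E_def)
    also have "\<dots> = cComp C (cComp C \<kappa> m) x" using km by simp
    also have "\<dots> = cComp C \<kappa> (cComp C m x)" using kah mh x by (simp add: hom_def E_def)
    also have "\<dots> = cComp C \<kappa> (cComp C m y)" using e by simp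
    also have "\<dots> = cComp C (cComp C \<kappa> m) y" using kah mh y by (simp add: hom_def E_def)
    also have "\<dots> = cComp C (cComp C t m2) y" using km by simp
    also have "\<dots> = cComp C t (cComp C m2 y)" using th mh y by (simp add: hom_def E_def)
    finally have "cComp C m2 x = cComp C m2 y"
      by (rule monoD[OF tm, rotated 2]) (use x y mh th in \<open>auto simp: hom_def E_def\<close>)
    then show "x = y" using pb_ext[OF pb x y e] by blast
  qed
  have "\<exists>!u. u \<in> hom C N (cDom C m) \<and> cComp C m u = k \<and> cComp C m2 u = cId C N"
    by (rule pb_univ[OF pb]) (use kh kah th No in \<open>auto simp: hom_def t_def\<close>)
  then obtain k' where k': "k' \<in> hom C N E" "cComp C m k' = k" unfolding E_def by blast
  have "\<exists>!u. u \<in> hom C B (cDom C m) \<and> cComp C m u = p \<and> cComp C m2 u = zero B N"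
    by (rule pb_univ[OF pb]) (use ph kah th o No kp zero_hom in \<open>auto simp: hom_def\<close>)
  then obtain p' where p': "p' \<in> hom C B E" "cComp C m p' = p" unfolding E_def by blast
  have "iso C m" using p1_iso[OF s ph sp k mm mh(1)] k' p' unfolding N_def by blast
  then obtain m' where m': "m' \<in> hom C A E" "cComp C m m' = cId C A"
    using iso_D mh by (fastforce simp: hom_def)
  define tau where "tau = cComp C m2 m'"
  have tauh: "tau \<in> hom C A N" unfolding tau_def using mh m' comp_hom by blast
  have ttau: "cComp C t tau = \<kappa>"
  proof -
    have "cComp C t tau = cComp C (cComp C t m2) m'" unfolding tau_def using th mh m'(1) by (simp add: hom_def)
    also have "\<dots> = cComp C (cComp C \<kappa> m) m'" using km by simp
    also have "\<dots> = cComp C \<kappa> (cComp C m m')" using kah mh m'(1) by (simp add: hom_def)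
    also have "\<dots> = \<kappa>" using m'(2) kah by (simp add: hom_def)
    finally show ?thesis .
  qed
  have "cComp C t (cComp C tau p) = cComp C t (zero B N)"
  proof -
    have "cComp C t (cComp C tau p) = cComp C (cComp C t tau) p" using th tauh ph by (simp add: hom_def)
    also have "\<dots> = zero B K" using ttau kp by simp
    also have "\<dots> = cComp C t (zero B N)" using th o No by (simp add: hom_def)
    finally show ?thesis .
  qed
  then have "cComp C tau p = zero B N"
    by (rule monoD[OF tm, rotated 2]) (use tauh ph th o No zero_hom in \<open>auto simp: hom_def\<close>)
  then obtain h where h: "h \<in> hom C K N" "cComp C h \<kappa> = tau"
    using cokernel_factor[OF kc, of tau N] tauh ph kah unfolding K_def by (auto simp: hom_def)
  have "cComp C (cComp C t h) \<kappa> = cComp C (cId C K) \<kappa>"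
  proof -
    have "cComp C (cComp C t h) \<kappa> = cComp C t (cComp C h \<kappa>)" using th h(1) kah by (simp add: hom_def)
    also have "\<dots> = \<kappa>" using h(2) ttau by simp
    finally show ?thesis using kah by (simp add: hom_def)
  qed
  then have th1: "cComp C t h = cId C K"
    by (rule epiD[OF cokernel_epi[OF kc], rotated 2]) (use th h o id_hom in \<open>auto simp: hom_def K_def\<close>)
  have "cComp C k h \<in> hom C K A" using kh h comp_hom by blast
  moreover have "cComp C \<kappa> (cComp C k h) = cId C K"
    using th1 kah kh h(1) unfolding t_def by (simp add: hom_def)
  ultimately show ?thesis unfolding K_def by blast
qed


lemma sa_s2:
  assumes Xo: "X \<in> cObj C"
    and comp: "\<And>j. normal_epi C j \<Longrightarrow> cCod C j = X \<Longrightarrow> \<exists>r \<in> hom C X (cDom C j). cComp C j r = cId C X"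
    and re: "regular_epi C m" and f: "f \<in> hom C X (cCod C m)"
  shows "\<exists>g \<in> hom C X (cDom C m). cComp C m g = f"
proof -
  have ma: "m \<in> cArr C" using re unfolding regular_epi_def using coeqD by blast
  have mh: "m \<in> hom C (cDom C m) (cCod C m)" using ma by (simp add: hom_def)
  obtain j i where pb: "is_pullback C j i f m" using pbex[OF f mh] by blast
  note pd = pbD[OF pb]
  have "regular_epi C j" using sa_pbstable[OF re pb] .
  then have "normal_epi C j" using sa_normal by blast
  moreover have "cCod C j = X" using pd f by (simp add: hom_def)
  ultimately obtain r where r: "r \<in> hom C X (cDom C j)" "cComp C j r = cId C X" using comp by blast
  define g where "g = cComp C i r"
  have gh: "g \<in> hom C X (cDom C m)" unfolding g_def using r pd by (auto simp: hom_def)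
  have "cComp C m g = cComp C (cComp C m i) r" unfolding g_def using r(1) pd by (simp add: hom_def)
  also have "\<dots> = cComp C (cComp C f j) r" using pd by simp
  also have "\<dots> = cComp C f (cComp C j r)" using r(1) pd by (simp add: hom_def)
  also have "\<dots> = f" using r(2) f by (simp add: hom_def)
  finally show ?thesis using gh by blast
qed

lemma sa_s3:
  assumes Xo: "X \<in> cObj C"
    and H: "\<And>m. (\<exists>p. p \<in> cArr C \<and> (\<exists>s \<in> hom C (cCod C p) (cDom C p). cComp C s p = cId C (cDom C p))
              \<and> is_cokernel C m p) \<Longrightarrow> cCod C m = X \<Longrightarrow>
              \<exists>!r. m \<in> cArr C \<and> r \<in> hom C (cCod C m) (cDom C m) \<and> cComp C m r = cId C (cCod C m)"
  shows "zero_obj C X"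
proof -
  obtain P p1 p2 where P: "is_product C P p1 p2 X X" using prodex Xo by blast
  have p: "p1 \<in> hom C P X" "p2 \<in> hom C P X" using prodD[OF P] by auto
  have Po: "P \<in> cObj C" using p hom_objs by blast
  define i2 where "i2 = tup p1 p2 (zero X X) (cId C X)"
  have i2: "i2 \<in> hom C X P" "cComp C p1 i2 = zero X X" "cComp C p2 i2 = cId C X"
    unfolding i2_def using tup[OF P, of "zero X X" X "cId C X"] zero_hom id_hom Xo by auto
  have ki: "is_kernel C i2 p1" using prod_kernel[OF P] unfolding i2_def .
  define i1 where "i1 = tup p1 p2 (cId C X) (zero X X)"
  have i1: "i1 \<in> hom C X P" "cComp C p1 i1 = cId C X" "cComp C p2 i1 = zero X X"
    unfolding i1_def using tup[OF P, of "cId C X" X "zero X X"] zero_hom id_hom Xo by auto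
  define D where "D = tup p1 p2 (cId C X) (cId C X)"
  have D: "D \<in> hom C X P" "cComp C p1 D = cId C X" "cComp C p2 D = cId C X"
    unfolding D_def using tup[OF P, of "cId C X" X "cId C X"] id_hom[OF Xo] by auto
  have cp1: "is_cokernel C p1 i2"
  proof (rule cokernelI)
    show "p1 \<in> cArr C" "i2 \<in> cArr C" "cDom C p1 = cCod C i2" using p i2 by (auto simp: hom_def)
    show "cComp C p1 i2 = zero (cDom C i2) (cCod C p1)" using i2 p by (simp add: hom_def)
    show "epi C p1" using section_epi[of p1 i1] i1 p by (simp add: hom_def)
    fix g T assume g: "g \<in> hom C (cCod C i2) T" "cComp C g i2 = zero (cDom C i2) T"
    have gh: "g \<in> hom C P T" using g i2 by (simp add: hom_def)
    have To: "T \<in> cObj C" using gh hom_objs by blast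
    have gi2: "cComp C g i2 = zero X T" using g i2 by (simp add: hom_def)
    have "cComp C (cComp C g i1) p1 = g"
    proof (rule je[of p1 P X i1 i2])
      show "p1 \<in> hom C P X" "i1 \<in> hom C X P" "cComp C p1 i1 = cId C X" "is_kernel C i2 p1"
        using p i1 ki by auto
      show "cComp C (cComp C g i1) p1 \<in> hom C P T" "g \<in> hom C P T" using gh i1 p comp_hom by blast+
      show "cComp C (cComp C (cComp C g i1) p1) i2 = cComp C g i2"
        using gh i1 p i2 gi2 Xo To by (simp add: hom_def)
      show "cComp C (cComp C (cComp C g i1) p1) i1 = cComp C g i1"
        using gh i1 p by (simp add: hom_def)
    qed
    moreover have "cComp C g i1 \<in> hom C (cCod C p1) T" using gh i1 p comp_hom by (auto simp: hom_def)
    ultimately show "\<exists>u \<in> hom C (cCod C p1) T. cComp C u p1 = g" by blast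
  qed
  have "\<exists>!r. p1 \<in> cArr C \<and> r \<in> hom C (cCod C p1) (cDom C p1) \<and> cComp C p1 r = cId C (cCod C p1)"
  proof (rule H)
    show "\<exists>p. p \<in> cArr C \<and> (\<exists>s \<in> hom C (cCod C p) (cDom C p). cComp C s p = cId C (cDom C p))
              \<and> is_cokernel C p1 p"
      using i2 p cp1 by (intro exI[of _ i2] conjI bexI[of _ p2]) (auto simp: hom_def)
    show "cCod C p1 = X" using p by (simp add: hom_def)
  qed
  then have "i1 = D" by (rule ex1_eq) (use i1 D p in \<open>auto simp: hom_def\<close>)
  then have "cId C X = zero X X" using i1(3) D(3) by simp
  then show ?thesis using id_zero_obj Xo by blast
qed

end

context sa begin

lemma sa_s1op:
  assumes "is_kernel (op_cat C) \<kappa> p" "split_epi (op_cat C) p" "normal_epi (op_cat C) p"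
  shows "split_mono (op_cat C) \<kappa>"
proof -
  have kc: "is_cokernel C \<kappa> p" and np: "normal_mono C p" using assms by auto
  obtain s where s: "s \<in> hom C (cCod C p) (cDom C p)" "cComp C s p = cId C (cDom C p)"
    using assms(2) unfolding split_epi_def by auto
  have ph: "p \<in> hom C (cDom C p) (cCod C p)" using cokernelD[OF kc] by (simp add: hom_def)
  obtain sg where sg: "sg \<in> hom C (cCod C \<kappa>) (cCod C p)" "cComp C \<kappa> sg = cId C (cCod C \<kappa>)"
    using sa_s1[OF kc ph s(1) s(2) np] by blast
  have "cDom C \<kappa> = cCod C p" using cokernelD[OF kc] by simp
  then show ?thesis unfolding split_mono_def is_retraction_def using sg cokernelD[OF kc] by auto
qed

lemma sa_s2op:
  assumes "complete_obj (op_cat C) X" shows "regular_injective_obj (op_cat C) X"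
proof -
  have Xo: "X \<in> cObj C" and all: "\<forall>m. normal_epi C m \<and> cCod C m = X \<longrightarrow> split_mono (op_cat C) m"
    using assms unfolding complete_obj_def by auto
  have comp: "\<And>j. normal_epi C j \<Longrightarrow> cCod C j = X \<Longrightarrow> \<exists>r \<in> hom C X (cDom C j). cComp C j r = cId C X"
  proof -
    fix j assume "normal_epi C j" "cCod C j = X"
    then have "split_mono (op_cat C) j" using all by blast
    then show "\<exists>r \<in> hom C X (cDom C j). cComp C j r = cId C X"
      unfolding split_mono_def is_retraction_def using \<open>cCod C j = X\<close> by auto
  qed
  show ?thesis unfolding regular_injective_obj_def injective_wrt_def
  proof (simp only: op_simps hom_op regular_mono_op, intro conjI Xo allI impI)
    fix m f assume "regular_epi C m \<and> f \<in> hom C X (cCod C m)"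
    then show "\<exists>g \<in> hom C X (cDom C m). cComp C m g = f" using sa_s2[OF Xo comp] by blast
  qed
qed

lemma sa_s3op:
  assumes "strong_complete_obj (op_cat C) X" shows "zero_obj C X"
proof -
  have Xo: "X \<in> cObj C" and all: "\<forall>m. protosplit_mono (op_cat C) m \<and> cCod C m = X \<longrightarrow>
      (\<exists>!r. is_retraction (op_cat C) r m)"
    using assms unfolding strong_complete_obj_def by auto
  show ?thesis
  proof (rule sa_s3[OF Xo])
    fix m assume a: "\<exists>p. p \<in> cArr C \<and> (\<exists>s \<in> hom C (cCod C p) (cDom C p). cComp C s p = cId C (cDom C p))
              \<and> is_cokernel C m p" and b: "cCod C m = X"
    have "protosplit_mono (op_cat C) m" unfolding protosplit_mono_def split_epi_def using a by simp
    then have "\<exists>!r. is_retraction (op_cat C) r m" using all b by blast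
    then show "\<exists>!r. m \<in> cArr C \<and> r \<in> hom C (cCod C m) (cDom C m) \<and> cComp C m r = cId C (cCod C m)"
      unfolding is_retraction_def by simp
  qed
qed

end

theorem proposition4p8:
  fixes C :: "('o, 'a) cat"
  shows
   "(abelian C \<longrightarrow>
       (\<forall>\<kappa>. (\<exists>p. is_kernel C \<kappa> p \<and> split_epi C p \<and> normal_epi C p) \<longrightarrow> split_mono C \<kappa>) \<and>
       (\<forall>X \<in> cObj C. proto_complete_obj C X) \<and>
       (\<forall>X \<in> cObj C. complete_obj C X \<longleftrightarrow> injective_obj C X) \<and>
       (\<forall>X \<in> cObj C. complete_obj C X \<longleftrightarrow> regular_injective_obj C X) \<and>
       (\<forall>X \<in> cObj C. strong_complete_obj C X \<longleftrightarrow> zero_obj C X))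
    \<and>
    (semi_abelian (op_cat C) \<longrightarrow>
       (\<forall>\<kappa>. (\<exists>p. is_kernel C \<kappa> p \<and> split_epi C p \<and> normal_epi C p) \<longrightarrow> split_mono C \<kappa>) \<and>
       (\<forall>X \<in> cObj C. complete_obj C X \<longleftrightarrow> regular_injective_obj C X) \<and>
       (\<forall>X \<in> cObj C. strong_complete_obj C X \<longleftrightarrow> zero_obj C X))"
proof (intro conjI impI)
  assume abC: "abelian C"
  interpret A: ab C
    by unfold_locales (use abC in \<open>auto simp: abelian_def\<close>)
  have proto: "\<And>m p. is_kernel C m p \<Longrightarrow> split_epi C p \<Longrightarrow> split_mono C m"
  proof -
    fix m p assume k: "is_kernel C m p" and se: "split_epi C p"
    then obtain s where "s \<in> hom C (cCod C p) (cDom C p)" "cComp C p s = cId C (cCod C p)"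
      unfolding split_epi_def by blast
    then show "split_mono C m" using A.ab_proto[OF k] by blast
  qed
  show "\<forall>\<kappa>. (\<exists>p. is_kernel C \<kappa> p \<and> split_epi C p \<and> normal_epi C p) \<longrightarrow> split_mono C \<kappa>"
    using proto by blast
  show "\<forall>X \<in> cObj C. proto_complete_obj C X"
    unfolding proto_complete_obj_def protosplit_mono_def using proto by blast
  have ci: "\<And>X. complete_obj C X \<longleftrightarrow> injective_obj C X"
    using A.ab_complete_inj A.inj_reg_inj A.reg_inj_complete by blast
  show "\<forall>X \<in> cObj C. complete_obj C X \<longleftrightarrow> injective_obj C X" using ci by blast
  show "\<forall>X \<in> cObj C. complete_obj C X \<longleftrightarrow> regular_injective_obj C X"
    using ci A.inj_reg_inj A.reg_inj_complete by blast
  show "\<forall>X \<in> cObj C. strong_complete_obj C X \<longleftrightarrow> zero_obj C X"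
    using A.ab_strong_zero A.zero_strong_complete by blast
next
  assume saC: "semi_abelian (op_cat C)"
  have pt: "pointed (op_cat C)" using saC unfolding semi_abelian_def by blast
  interpret D: sa "op_cat C"
    by unfold_locales (use saC pt in auto)
  interpret P: pc C by unfold_locales (use pt in simp)
  show "\<forall>\<kappa>. (\<exists>p. is_kernel C \<kappa> p \<and> split_epi C p \<and> normal_epi C p) \<longrightarrow> split_mono C \<kappa>"
    using D.sa_s1op by simp blast
  show "\<forall>X \<in> cObj C. complete_obj C X \<longleftrightarrow> regular_injective_obj C X"
    using D.sa_s2op P.reg_inj_complete by simp blast
  show "\<forall>X \<in> cObj C. strong_complete_obj C X \<longleftrightarrow> zero_obj C X"
    using D.sa_s3op P.zero_strong_complete by simp blast
qed

end
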